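(* Let $a$ be a fixed positive integer. For any positive integers $k,n$ with $k\ge n$, $$S_t(N_{k,n})=\sum_{j=0}^{k-1}\left[\sum_{i=1}^{\min\{n,k-j\}}(-1)^{k-i-j}\binom{k-i}{k-n}\binom{k-j}{i}t^{n-i}\right]S(z_a^j)\ast z_a^{k-j}.$$ In particular, if $a>1$, $$\sum_{\substack{k_1+\cdots+k_n=k\\ k_i\ge1}}\zeta^t(ak_1,\ldots,ak_n)=\sum_{j=0}^{k-1}\left[\sum_{i=1}^{\min\{n,k-j\}}(-1)^{k-i-j}\binom{k-i}{k-n}\binom{k-j}{i}t^{n-i}\right]\zeta^\star(\{a\}^j)\zeta(\{a\}^{k-j}).$$
   Context: $\mathfrak{h}_t=\mathbb{Q}[t]\langle x,y\rangle$ ($1$ = empty word), $\mathfrak{h}^1_t=\mathbb{Q}[t]+\mathfrak{h}_ty$, $z_k=x^{k-1}y$, $z_a^j$ a concatenation power. $N_{k,n}=\sum_{k_1+\cdots+k_n=k,\ k_i\ge1}z_{ak_1}\cdots z_{ak_n}$. For a parameter $s$, $\sigma_s$ is the algebra automorphism with $\sigma_s(x)=x,\sigma_s(y)=sx+y$ and $S_s$ is the linear map with $S_s(1)=1$, $S_s(wa)=\sigma_s(w)a$ for words $w$ and letters $a$; $S:=S_1$. The harmonic product $\ast$ on $\mathfrak{h}^1_t$ is the $\mathbb{Q}[t]$-bilinear product with $1\ast w=w\ast1=w$ and $z_kw_1\ast z_lw_2=z_k(w_1\ast z_lw_2)+z_l(z_kw_1\ast w_2)+z_{k+l}(w_1\ast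 w_2)$. $\{a\}^j$ is $j$ repetitions of $a$; values at the empty index are $1$. For $k_1\ge2$, $\zeta(k_1,\ldots,k_n)=\sum_{m_1>\cdots>m_n>0}\prod m_j^{-k_j}$, $\zeta^\star(k_1,\ldots,k_n)=\sum_{m_1\ge\cdots\ge m_n>0}\prod m_j^{-k_j}$, $\zeta^t(k_1,\ldots,k_n)=\sum_{\mathbf p}t^{n-\mathrm{dep}(\mathbf p)}\zeta(\mathbf p)$ over sequences $\mathbf p$ obtained from $(k_1,\ldots,k_n)$ by replacing each separating comma by a comma or a plus sign ($\mathrm{dep}$ = length). *)

theory Defs
  imports "HOL-Analysis.Analysis" "HOL-Computational_Algebra.Polynomial"
begin

datatype letter = X | Y

type_synonym word = "letter list"

text \<open>An element of h_t is represented by its coefficient function on words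
  (all elements used below have finite support).\<close>
type_synonym elt = "word \<Rightarrow> rat poly"

definition supp :: "elt \<Rightarrow> word set" where
  "supp f = {w. f w \<noteq> 0}"

definition single :: "word \<Rightarrow> elt" where
  "single w = (\<lambda>v. if v = w then 1 else 0)"

definition tvar :: "rat poly" where
  "tvar = [:0, 1:]"

definition conc :: "elt \<Rightarrow> elt \<Rightarrow> elt" where
  "conc f g = (\<lambda>v. \<Sum>i\<le>length v. f (take i v) * g (drop i v))"

definition lin_ext :: "(word \<Rightarrow> elt) \<Rightarrow> elt \<Rightarrow> elt" where
  "lin_ext F f = (\<lambda>v. \<Sum>u\<in>supp f. f u * F u v)"

definition lin_ext2 :: "(word \<Rightarrow> word \<Rightarrow> elt) \<Rightarrow> elt \<Rightarrow> elt \<Rightarrow> elt" where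
  "lin_ext2 F f g = (\<lambda>v. \<Sum>u\<in>supp f. \<Sum>u'\<in>supp g. f u * g u' * F u u' v)"

definition zw :: "nat list \<Rightarrow> word" where
  "zw ks = concat (map (\<lambda>k. replicate (k - 1) X @ [Y]) ks)"

text \<open>Decoding a word of h^1 (empty or ending in y) into its index list.\<close>
primrec dec_aux :: "nat \<Rightarrow> word \<Rightarrow> nat list" where
  "dec_aux c [] = []"
| "dec_aux c (l # w) = (case l of X \<Rightarrow> dec_aux (Suc c) w | Y \<Rightarrow> Suc c # dec_aux 0 w)"

definition dec :: "word \<Rightarrow> nat list" where
  "dec w = dec_aux 0 w"

primrec sigma_w :: "rat poly \<Rightarrow> word \<Rightarrow> elt" where
  "sigma_w s [] = single []"
| "sigma_w s (l # w) = conc (case l of X \<Rightarrow> single [X]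
                                     | Y \<Rightarrow> (\<lambda>v. s * single [X] v + single [Y] v))
                              (sigma_w s w)"

definition S_w :: "rat poly \<Rightarrow> word \<Rightarrow> elt" where
  "S_w s w = (if w = [] then single [] else conc (sigma_w s (butlast w)) (single [last w]))"

definition S_map :: "rat poly \<Rightarrow> elt \<Rightarrow> elt" where
  "S_map s f = lin_ext (S_w s) f"

fun stuffle :: "nat list \<Rightarrow> nat list \<Rightarrow> nat list list" where
  "stuffle [] l = [l]"
| "stuffle k [] = [k]"
| "stuffle (a # u) (b # v) =
     map (Cons a) (stuffle u (b # v)) @ map (Cons b) (stuffle (a # u) v)
     @ map (Cons (a + b)) (stuffle u v)"

definition harm_w :: "word \<Rightarrow> word \<Rightarrow> elt" where
  "harm_w u v = (\<lambda>w. of_nat (count_list (map zw (stuffle (dec u) (dec v))) w))"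

definition harm :: "elt \<Rightarrow> elt \<Rightarrow> elt" where
  "harm f g = lin_ext2 harm_w f g"

definition compositions :: "nat \<Rightarrow> nat \<Rightarrow> nat list set" where
  "compositions k n = {ks. length ks = n \<and> (\<forall>x\<in>set ks. 1 \<le> x) \<and> sum_list ks = k}"

definition Nkn :: "nat \<Rightarrow> nat \<Rightarrow> nat \<Rightarrow> elt" where
  "Nkn a k n = (\<lambda>w. \<Sum>ks\<in>compositions k n. single (zw (map (\<lambda>x. a * x) ks)) w)"

definition mzv :: "nat list \<Rightarrow> real" where
  "mzv ks = (\<Sum>\<^sub>\<infinity> ms \<in> {ms. length ms = length ks \<and> sorted_wrt (>) ms \<and> (\<forall>m\<in>set ms. 0 < m)}.
              \<Prod>i<length ks. 1 / real (ms ! i) ^ (ks ! i))"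

definition mzsv :: "nat list \<Rightarrow> real" where
  "mzsv ks = (\<Sum>\<^sub>\<infinity> ms \<in> {ms. length ms = length ks \<and> sorted_wrt (\<ge>) ms \<and> (\<forall>m\<in>set ms. 0 < m)}.
              \<Prod>i<length ks. 1 / real (ms ! i) ^ (ks ! i))"

text \<open>All index lists obtained by replacing each separating comma by a comma or a plus.\<close>
fun merges :: "nat list \<Rightarrow> nat list list" where
  "merges [] = [[]]"
| "merges [k] = [[k]]"
| "merges (k # l # ks) = map (Cons k) (merges (l # ks)) @ merges ((k + l) # ks)"

definition zeta_t :: "real \<Rightarrow> nat list \<Rightarrow> real" where
  "zeta_t t ks = (\<Sum>p\<leftarrow>merges ks. t ^ (length ks - length p) * mzv p)"

end

theory Submission
  imports Defs
begin



definition pos :: "nat list \<Rightarrow> bool" where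
  "pos q = (\<forall>x\<in>set q. 1 \<le> x)"

definition compall :: "nat \<Rightarrow> nat list set" where
  "compall k = {q. pos q \<and> sum_list q = k}"

lemma pos_simps[simp]: "pos [] = True" "pos (x # q) = (1 \<le> x \<and> pos q)"
  "pos (u @ v) = (pos u \<and> pos v)"
  by (auto simp: pos_def)

lemma pos_length_le: "pos q \<Longrightarrow> length q \<le> sum_list q"
  by (induction q) auto

lemma finite_compall: "finite (compall k)"
proof -
  have "compall k \<subseteq> {xs. set xs \<subseteq> {..k} \<and> length xs \<le> k}"
    using pos_length_le by (auto simp: compall_def member_le_sum_list intro: order.trans[OF member_le_sum_list])
  moreover have "finite {xs. set xs \<subseteq> {..k} \<and> length xs \<le> k}"
    by (rule finite_lists_length_le) auto
  ultimately show ?thesis by (rule finite_subset)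
qed

lemma compositions_eq: "compositions k n = {q \<in> compall k. length q = n}"
  by (auto simp: compositions_def compall_def pos_def)

lemma finite_compositions: "finite (compositions k n)"
  using finite_compall by (simp add: compositions_eq)

lemma compall_Suc: "compall (Suc j) = (\<lambda>(c,p). c # p) ` (SIGMA c:{1..Suc j}. compall (Suc j - c))"
proof (intro set_eqI iffI)
  fix q assume "q \<in> compall (Suc j)"
  then obtain c p where "q = c # p" by (cases q) (auto simp: compall_def)
  with \<open>q \<in> compall (Suc j)\<close> show "q \<in> (\<lambda>(c,p). c # p) ` (SIGMA c:{1..Suc j}. compall (Suc j - c))"
    by (auto simp: compall_def image_iff)
qed (auto simp: compall_def)

lemma sum_compall_Suc:
  "(\<Sum>q\<in>compall (Suc j). h q) = (\<Sum>c\<in>{1..Suc j}. \<Sum>p\<in>compall (Suc j - c). h (c # p))"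
proof -
  have inj: "inj_on (\<lambda>(c,p). c # p) (SIGMA c:{1..Suc j}. compall (Suc j - c))"
    by (auto simp: inj_on_def)
  show ?thesis
    unfolding compall_Suc sum.reindex[OF inj]
    by (subst sum.Sigma) (auto simp: finite_compall split_def)
qed

lemma compositions_Suc: "compositions K (Suc n) = (\<lambda>(c,p). c # p) ` (SIGMA c:{1..K}. compositions (K - c) n)"
proof (intro set_eqI iffI)
  fix q assume "q \<in> compositions K (Suc n)"
  then obtain c p where "q = c # p" by (cases q) (auto simp: compositions_def)
  with \<open>q \<in> compositions K (Suc n)\<close> show "q \<in> (\<lambda>(c,p). c # p) ` (SIGMA c:{1..K}. compositions (K - c) n)"
    by (auto simp: compositions_def image_iff)
qed (auto simp: compositions_def)

lemma sum_compositions_Suc: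
  "(\<Sum>q\<in>compositions K (Suc n). h q) = (\<Sum>c\<in>{1..K}. \<Sum>p\<in>compositions (K - c) n. h (c # p))"
proof -
  have inj: "inj_on (\<lambda>(c,p). c # p) (SIGMA c:{1..K}. compositions (K - c) n)"
    by (auto simp: inj_on_def)
  show ?thesis
    unfolding compositions_Suc sum.reindex[OF inj]
    by (subst sum.Sigma) (auto simp: finite_compositions split_def)
qed

definition addhd :: "nat \<Rightarrow> nat list \<Rightarrow> nat list" where
  "addhd k p = (k + hd p) # tl p"

lemma merges_add: "merges ((k + l) # ks) = map (addhd k) (merges (l # ks))"
proof (induction ks arbitrary: l)
  case Nil then show ?case by (simp add: addhd_def)
next
  case (Cons m ks)
  show ?case using Cons[of "l + m"] by (simp add: addhd_def add.assoc)
qed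

lemma merges_Cons2: "merges (c # c2 # cs) = map (Cons c) (merges (c2 # cs)) @ map (addhd c) (merges (c2 # cs))"
  using merges_add[of c c2 cs] by simp

lemma merges_facts:
  "p \<in> set (merges ks) \<Longrightarrow> sum_list p = sum_list ks \<and> (pos ks \<longrightarrow> pos p)
     \<and> (ks \<noteq> [] \<longrightarrow> p \<noteq> []) \<and> length p \<le> length ks \<and> (ks = [] \<longrightarrow> p = [])"
  by (induction ks arbitrary: p rule: merges.induct) (auto simp: add.assoc intro: le_SucI)

lemma count_map_Cons: "count_list (map (Cons c) M) q =
   (case q of [] \<Rightarrow> 0 | x # q' \<Rightarrow> if x = c then count_list M q' else 0)"
  by (induction M) (auto split: list.splits)

lemma count_map_addhd: "(\<forall>p\<in>set M. p \<noteq> []) \<Longrightarrow> count_list (map (addhd c) M) q =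
   (case q of [] \<Rightarrow> 0 | x # q' \<Rightarrow> if c \<le> x then count_list M ((x - c) # q') else 0)"
proof (induction M)
  case Nil then show ?case by (simp split: list.splits)
next
  case (Cons p M)
  then obtain y p' where p: "p = y # p'" by (cases p) auto
  show ?case using Cons by (auto simp: p addhd_def split: list.splits)
qed

lemma count_merges_Cons:
  assumes "cs \<noteq> []"
  shows "count_list (merges (c # cs)) q =
   (case q of [] \<Rightarrow> 0 | x # q' \<Rightarrow> (if x = c then count_list (merges cs) q' else 0)
        + (if c \<le> x then count_list (merges cs) ((x - c) # q') else 0))"
proof -
  obtain c2 cs' where cs: "cs = c2 # cs'" using assms by (cases cs) auto
  have ne: "\<forall>p\<in>set (merges cs). p \<noteq> []" using merges_facts[of _ cs] cs by auto
  show ?thesis unfolding cs merges_Cons2 count_list_append count_map_Cons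
    count_map_addhd[OF ne[unfolded cs]]
    by (simp split: list.splits)
qed

lemma count_merges_pos0: "pos ks \<Longrightarrow> count_list (merges ks) (0 # q) = 0"
  using merges_facts[of "0 # q" ks] by (auto simp: count_list_0_iff)


lemma hockey:
  assumes "s \<le> D" "0 < e"
  shows "D choose e = ((D - s) choose e) + (\<Sum>c\<in>{1..s}. (D - c) choose (e - 1))"
  using assms(1)
proof (induction s)
  case 0 then show ?case by simp
next
  case (Suc s)
  obtain e' where e: "e = Suc e'" using assms(2) by (cases e) auto
  have D: "D - s = Suc (D - Suc s)" using Suc.prems by simp
  have "D choose e = ((D - s) choose e) + (\<Sum>c\<in>{1..s}. (D - c) choose (e - 1))"
    using Suc by simp
  also have "(D - s) choose e = ((D - Suc s) choose e) + ((D - Suc s) choose (e - 1))"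
    unfolding D e by simp
  finally show ?case by simp
qed

lemma sum_if_const: "(\<Sum>p\<in>S. if P then f p else 0) = (if P then sum f S else 0)"
  by auto

lemma compositions_one: "compositions K (Suc 0) = (if 1 \<le> K then { [K] } else {})"
  by (auto simp: compositions_def length_Suc_conv)

lemma countA:
  assumes "1 \<le> n" "pos q"
  shows "(\<Sum>c\<in>compositions (sum_list q) n. count_list (merges c) q)
         = (if length q \<le> n then (sum_list q - length q) choose (n - length q) else 0)"
  using assms
proof (induction n arbitrary: q rule: nat_induct_at_least)
  case base
  show ?case
  proof (cases q)
    case Nil then show ?thesis by (simp add: compositions_one)
  next
    case (Cons x q')
    show ?thesis
    proof (cases q')
      case Nil then show ?thesis using Cons base by (simp add: compositions_one)
    next
      case (Cons y q'')
      then show ?thesis using \<open>q = x # q'\<close> base by (auto simp: compositions_one)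
    qed
  qed
next
  case (Suc n)
  show ?case
  proof (cases q)
    case Nil
    have "compositions 0 (Suc n) = {}"
      apply (auto simp: compositions_def) apply (case_tac x) by auto
    then show ?thesis using Nil by simp
  next
    case (Cons x q')
    define K where "K = sum_list q"
    define L where "L = length q'"
    have x1: "1 \<le> x" and pq': "pos q'" using Suc.prems Cons by auto
    have K: "K = x + sum_list q'" by (simp add: K_def Cons)
    have Lle: "L \<le> sum_list q'" using pos_length_le[OF pq'] by (simp add: L_def)
    have nepos: "p \<noteq> [] \<and> pos p" if "p \<in> compositions m n" for p m
      using that Suc.hyps by (auto simp: compositions_def pos_def)
    have "(\<Sum>c\<in>compositions K (Suc n). count_list (merges c) q)
        = (\<Sum>c\<in>{1..K}. \<Sum>p\<in>compositions (K - c) n.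
             (if x = c then count_list (merges p) q' else 0)
           + (if c \<le> x then count_list (merges p) ((x - c) # q') else 0))"
      unfolding sum_compositions_Suc
      by (intro sum.cong refl) (simp add: count_merges_Cons nepos Cons)
    also have "\<dots> = (\<Sum>c\<in>{1..K}. (if x = c then (\<Sum>p\<in>compositions (K - c) n. count_list (merges p) q') else 0))
        + (\<Sum>c\<in>{1..K}. (if c \<le> x then (\<Sum>p\<in>compositions (K - c) n. count_list (merges p) ((x - c) # q')) else 0))"
      by (simp only: sum.distrib sum_if_const)
    also have "(\<Sum>c\<in>{1..K}. (if x = c then (\<Sum>p\<in>compositions (K - c) n. count_list (merges p) q') else 0))
        = (\<Sum>p\<in>compositions (sum_list q') n. count_list (merges p) q')"
      using x1 by (simp add: K)
    also have "\<dots> = (if L \<le> n then (sum_list q' - L) choose (n - L) else 0)"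
      using Suc.IH[OF pq'] by (simp add: L_def)
    also have "(\<Sum>c\<in>{1..K}. (if c \<le> x then (\<Sum>p\<in>compositions (K - c) n. count_list (merges p) ((x - c) # q')) else 0))
        = (\<Sum>c\<in>{1..x}. (\<Sum>p\<in>compositions (K - c) n. count_list (merges p) ((x - c) # q')))"
      by (rule sum.mono_neutral_cong_right) (auto simp: K)
    also have "\<dots> = (\<Sum>c\<in>{1..x-1}. (\<Sum>p\<in>compositions (K - c) n. count_list (merges p) ((x - c) # q')))"
    proof -
      have "{1..x} = insert x {1..x-1}" using x1 by auto
      moreover have "(\<Sum>p\<in>compositions (K - x) n. count_list (merges p) ((x - x) # q')) = 0"
        using count_merges_pos0 nepos by simp
      ultimately show ?thesis by (simp add: sum.insert_if)
    qed
    also have "\<dots> = (\<Sum>c\<in>{1..x-1}. (if L + 1 \<le> n then (sum_list q' + (x - c) - (L + 1)) choose (n - (L + 1)) else 0))"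
    proof (intro sum.cong refl)
      fix c assume c: "c \<in> {1..x-1}"
      have s: "sum_list ((x - c) # q') = K - c" using c K by auto
      show "(\<Sum>p\<in>compositions (K - c) n. count_list (merges p) ((x - c) # q'))
          = (if L + 1 \<le> n then (sum_list q' + (x - c) - (L + 1)) choose (n - (L + 1)) else 0)"
      proof -
        have xc: "1 \<le> x - c" "pos ((x - c) # q')" using c pq' by auto
        have e1: "K - c - length ((x - c) # q') = sum_list q' + (x - c) - (L + 1)"
          using c by (auto simp: K L_def)
        show ?thesis using Suc.IH[OF xc(2), unfolded s e1] by (simp add: L_def)
      qed
    qed
    finally have lhs: "(\<Sum>c\<in>compositions K (Suc n). count_list (merges c) q)
       = (if L \<le> n then (sum_list q' - L) choose (n - L) else 0)
         + (\<Sum>c\<in>{1..x-1}. (if L + 1 \<le> n then (sum_list q' + (x - c) - (L + 1)) choose (n - (L + 1)) else 0))" .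
    have goal: "(if L \<le> n then (sum_list q' - L) choose (n - L) else 0)
         + (\<Sum>c\<in>{1..x-1}. (if L + 1 \<le> n then (sum_list q' + (x - c) - (L + 1)) choose (n - (L + 1)) else 0))
        = (if Suc L \<le> Suc n then (K - Suc L) choose (Suc n - Suc L) else 0)"
    proof (cases "L \<le> n")
      case False then show ?thesis by simp
    next
      case True
      show ?thesis
      proof (cases "L = n")
        case True then show ?thesis by simp
      next
        case False
        define D where "D = K - Suc L"
        have hk: "D choose (n - L) = ((D - (x - 1)) choose (n - L)) + (\<Sum>c\<in>{1..x-1}. (D - c) choose (n - L - 1))"
          by (rule hockey) (use Lle x1 False \<open>L \<le> n\<close> in \<open>auto simp: D_def K\<close>)
        have "(\<Sum>c\<in>{1..x-1}. (if L + 1 \<le> n then (sum_list q' + (x - c) - (L + 1)) choose (n - (L + 1)) else 0))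
            = (\<Sum>c\<in>{1..x-1}. (D - c) choose (n - L - 1))"
          using False \<open>L \<le> n\<close> Lle by (intro sum.cong refl) (auto simp: D_def K add.commute)
        moreover have "sum_list q' - L = D - (x - 1)" using Lle x1 by (simp add: D_def K)
        ultimately show ?thesis using hk \<open>L \<le> n\<close> by (simp add: D_def)
      qed
    qed
    show ?thesis using lhs goal by (simp add: K_def L_def Cons)
  qed
qed


lemma compall_0: "compall 0 = {[]}"
  by (auto simp: compall_def) (case_tac x, auto)

lemma compall_1: "compall (Suc 0) = {[Suc 0]}"
proof -
  have "q = [Suc 0]" if "pos q" "sum_list q = Suc 0" for q
    using that pos_length_le[of q] by (cases q) (auto simp: compall_def dest: pos_length_le)
  then show ?thesis by (auto simp: compall_def)
qed

lemma count_merges_ones: "count_list (merges (replicate j 1)) p = (if p \<in> compall j then 1 else 0)"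
proof (induction j arbitrary: p)
  case 0 then show ?case by (simp add: compall_0)
next
  case (Suc j)
  show ?case
  proof (cases j)
    case 0 then show ?thesis by (simp add: compall_1)
  next
    case (Suc j')
    have ne: "replicate j (1::nat) \<noteq> []" using Suc by simp
    show ?thesis
    proof (cases p)
      case Nil
      have "[] \<notin> set (merges (replicate (Suc j) 1))" using merges_facts[of "[]" "replicate (Suc j) 1"] by auto
      then show ?thesis using Nil by (simp add: compall_def)
    next
      case (Cons x p')
      show ?thesis
        unfolding replicate_Suc count_merges_Cons[OF ne] Cons Suc.IH
        by (cases x) (auto simp: compall_def)
    qed
  qed
qed

lemma set_merges_ones: "set (merges (replicate j 1)) = compall j"
proof -
  have "x \<in> set xs \<longleftrightarrow> count_list xs x \<noteq> 0" for x :: "nat list" and xs by (simp add: count_list_0_iff)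
  then show ?thesis using count_merges_ones[of j] by (auto split: if_splits)
qed

lemma sum_list_as_sum: "finite Q \<Longrightarrow> set xs \<subseteq> Q \<Longrightarrow>
  sum_list (map f xs) = (\<Sum>q\<in>Q. of_nat (count_list xs q) * f q)"
proof (induction xs)
  case Nil then show ?case by simp
next
  case (Cons x xs)
  have "(\<Sum>q\<in>Q. of_nat (count_list (x # xs) q) * f q)
      = (\<Sum>q\<in>Q. of_nat (count_list xs q) * f q) + (\<Sum>q\<in>Q. if x = q then f q else 0)"
    by (simp add: sum.distrib[symmetric]) (intro sum.cong refl, auto simp: algebra_simps)
  also have "(\<Sum>q\<in>Q. if x = q then f q else 0) = f x" using Cons.prems by (simp add: sum.delta)
  finally show ?case using Cons by (simp add: add.commute)
qed

lemma sum_merges_ones: "(\<Sum>p\<leftarrow>merges (replicate j 1). f p) = (\<Sum>p\<in>compall j. (f p :: 'a :: semiring_1))"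
proof -
  have "sum_list (map f (merges (replicate j 1))) = (\<Sum>q\<in>compall j. of_nat (count_list (merges (replicate j 1)) q) * f q)"
    by (rule sum_list_as_sum) (use set_merges_ones[of j] finite_compall in auto)
  also have "\<dots> = sum f (compall j)" by (intro sum.cong refl) (simp add: count_merges_ones[simplified])
  finally show ?thesis .
qed

lemma stuffle_facts:
  "s \<in> set (stuffle u v) \<Longrightarrow> sum_list s = sum_list u + sum_list v \<and> (pos u \<and> pos v \<longrightarrow> pos s)
    \<and> (s = [] \<longleftrightarrow> u = [] \<and> v = [])"
  by (induction u v arbitrary: s rule: stuffle.induct) auto

lemma stuffle_Nil2[simp]: "stuffle p [] = [p]"
  by (cases p) auto

lemma count_stuffle_Nil: "count_list (stuffle u v) [] = (if u = [] \<and> v = [] then 1 else 0)"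
proof -
  have "[] \<notin> set (stuffle u v)" if "\<not> (u = [] \<and> v = [])" using stuffle_facts[of "[]" u v] that by auto
  then show ?thesis by auto
qed

lemma count_stuffle_Cons: "count_list (stuffle (a # u) (b # v)) (x # q') =
   (if a = x then count_list (stuffle u (b # v)) q' else 0)
 + (if b = x then count_list (stuffle (a # u) v) q' else 0)
 + (if a + b = x then count_list (stuffle u v) q' else 0)"
  by (simp add: count_map_Cons)

lemma pos_ones: "pos q \<Longrightarrow> length q = sum_list q \<Longrightarrow> q = replicate (length q) 1"
proof (induction q)
  case (Cons x q)
  then have "length q \<le> sum_list q" using pos_length_le by auto
  then have "x = 1" "length q = sum_list q" using Cons.prems by auto
  then show ?case using Cons by auto
qed simp

lemma countB_arith:
  fixes x j m' L S :: nat
  assumes LS: "P \<Longrightarrow> L \<le> S" and j: "1 \<le> j"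
  shows "(if 1 \<le> x \<and> x \<le> j then (if P \<and> S = j - x + Suc m' then L choose Suc m' else 0) else 0)
  + (if 1 = x then (if P \<and> S = j + m' then L choose m' else 0) else 0)
  + (if 2 \<le> x \<and> x \<le> j + 1 then (if P \<and> S = j - (x - 1) + m' then L choose m' else 0) else 0)
  = (if 1 \<le> x \<and> P \<and> x + S = j + Suc m' then Suc L choose Suc m' else 0)"
proof (cases P)
  case False then show ?thesis by simp
next
  case True
  note LS = LS[OF True]
  consider "x = 0" | "x = 1" | "2 \<le> x" "x \<le> j" | "x = j + 1" | "j + 1 < x" by linarith
  then show ?thesis
  proof cases
    case 1 then show ?thesis by simp
  next
    case 2 then show ?thesis using j True by simp
  next
    case 3
    have e1: "(S = j - x + Suc m') = (x + S = j + Suc m')" "(S = j - (x - 1) + m') = (x + S = j + Suc m')"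
      using 3 by auto
    show ?thesis using 3 True unfolding e1 by simp
  next
    case 4
    have e1: "(S = j - (x - 1) + m') = (x + S = j + Suc m')" using 4 by auto
    show ?thesis
    proof (cases "x + S = j + Suc m'")
      case True
      then have "L \<le> m'" using LS 4 by simp
      then have "L choose Suc m' = 0" by simp
      then have "Suc L choose Suc m' = L choose m'" by simp
      then show ?thesis using 4 True \<open>P\<close> j unfolding e1 by simp
    next
      case False then show ?thesis using 4 j unfolding e1 by simp
    qed
  next
    case 5
    show ?thesis
    proof (cases "x + S = j + Suc m'")
      case True
      then have "Suc L < Suc m'" using LS 5 by simp
      then have "Suc L choose Suc m' = 0" by (simp del: binomial_Suc_Suc)
      then show ?thesis using 5 by simp
    next
      case False then show ?thesis using 5 by simp
    qed
  qed
qed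

lemma countB:
  "(\<Sum>p\<in>compall j. count_list (stuffle p (replicate m 1)) q)
     = (if q \<in> compall (j + m) then length q choose m else 0)"
proof (induction q arbitrary: j m)
  case Nil
  have "(\<Sum>p\<in>compall j. count_list (stuffle p (replicate m 1)) []) = (\<Sum>p\<in>compall j. if p = [] \<and> m = 0 then 1 else 0)"
    by (intro sum.cong refl) (simp add: count_stuffle_Nil)
  also have "\<dots> = (if m = 0 \<and> [] \<in> compall j then 1 else 0)"
    by (cases "m = 0") (simp_all add: sum.delta' finite_compall)
  finally show ?case by (auto simp: compall_def)
next
  case (Cons x q')
  define L where "L = length q'"
  define S where "S = sum_list q'"
  have IH: "\<And>J M. (\<Sum>p\<in>compall J. count_list (stuffle p (replicate M 1)) q')
      = (if pos q' \<and> S = J + M then L choose M else 0)"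
    using Cons.IH by (simp add: compall_def L_def S_def)
  have LS: "pos q' \<Longrightarrow> L \<le> S" using pos_length_le by (simp add: L_def S_def)
  have rhs: "(if x # q' \<in> compall (j + m) then length (x # q') choose m else 0)
     = (if 1 \<le> x \<and> pos q' \<and> x + S = j + m then Suc L choose m else 0)"
    by (simp add: compall_def L_def S_def)
  show ?case
  proof (cases "j = 0")
    case True
    have "(\<Sum>p\<in>compall j. count_list (stuffle p (replicate m 1)) (x # q'))
        = (if replicate m 1 = x # q' then 1 else 0)"
      using True by (simp add: compall_0)
    also have "\<dots> = (if 1 \<le> x \<and> pos q' \<and> x + S = j + m then Suc L choose m else 0)"
    proof (cases "1 \<le> x \<and> pos q' \<and> x + S = j + m")
      case c: True
      show ?thesis
      proof (cases "Suc L = m")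
        case True
        then have "x # q' = replicate m 1" using pos_ones[of "x # q'"] c \<open>j = 0\<close> by (simp add: L_def S_def)
        then show ?thesis using True c by simp
      next
        case False
        have "Suc L \<le> m" using LS c True by simp
        then have "Suc L < m" using False by simp
        moreover have "replicate m 1 \<noteq> x # q'"
        proof
          assume "replicate m 1 = x # q'"
          then have "length (replicate m (1::nat)) = length (x # q')" by simp
          then show False using False by (simp add: L_def)
        qed
        ultimately show ?thesis using c by simp
      qed
    next
      case False
      have "replicate m 1 \<noteq> x # q'"
      proof
        assume h: "replicate m 1 = x # q'"
        have "pos (replicate m (1::nat))" "sum_list (replicate m (1::nat)) = m" by (auto simp: pos_def sum_list_replicate)
        then have "pos (x # q')" "sum_list (x # q') = m" unfolding h[symmetric] by auto
        then have "pos (x # q')" "x + S = m" by (auto simp: S_def)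
        then show False using False True by simp
      qed
      then have A: "(if replicate m 1 = x # q' then 1 else 0) = (0::nat)" by simp
      have B: "(if 1 \<le> x \<and> pos q' \<and> x + S = j + m then Suc L choose m else 0) = 0"
        by (rule if_not_P) (use False in blast)
      show ?thesis unfolding A B ..
    qed
    finally show ?thesis by (simp add: rhs)
  next
    case False
    then obtain j' where j: "j = Suc j'" by (cases j) auto
    show ?thesis
    proof (cases m)
      case 0
      have "(\<Sum>p\<in>compall j. count_list (stuffle p (replicate m 1)) (x # q'))
          = (\<Sum>p\<in>compall j. if p = x # q' then 1 else 0)"
        using 0 by (intro sum.cong refl) auto
      also have "\<dots> = (if x # q' \<in> compall j then 1 else 0)"
        by (simp add: sum.delta' finite_compall)
      finally show ?thesis using 0 by simp
    next
      case (Suc m')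
      have "(\<Sum>p\<in>compall j. count_list (stuffle p (replicate m 1)) (x # q'))
        = (\<Sum>c\<in>{1..j}. \<Sum>p\<in>compall (j - c).
             (if c = x then count_list (stuffle p (replicate m 1)) q' else 0)
           + (if 1 = x then count_list (stuffle (c # p) (replicate m' 1)) q' else 0)
           + (if c + 1 = x then count_list (stuffle p (replicate m' 1)) q' else 0))"
        unfolding j sum_compall_Suc unfolding Suc replicate_Suc count_stuffle_Cons by simp
      also have "\<dots> = (\<Sum>c\<in>{1..j}. if c = x then (\<Sum>p\<in>compall (j - c). count_list (stuffle p (replicate m 1)) q') else 0)
          + (if 1 = x then (\<Sum>c\<in>{1..j}. \<Sum>p\<in>compall (j - c). count_list (stuffle (c # p) (replicate m' 1)) q') else 0)
          + (\<Sum>c\<in>{1..j}. if c + 1 = x then (\<Sum>p\<in>compall (j - c). count_list (stuffle p (replicate m' 1)) q') else 0)"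
        by (simp only: sum.distrib sum_if_const)
      also have "(\<Sum>c\<in>{1..j}. \<Sum>p\<in>compall (j - c). count_list (stuffle (c # p) (replicate m' 1)) q')
          = (\<Sum>p\<in>compall j. count_list (stuffle p (replicate m' 1)) q')"
        unfolding j sum_compall_Suc ..
      also have "(\<Sum>c\<in>{1..j}. if c = x then (\<Sum>p\<in>compall (j - c). count_list (stuffle p (replicate m 1)) q') else 0)
          = (if 1 \<le> x \<and> x \<le> j then (\<Sum>p\<in>compall (j - x). count_list (stuffle p (replicate m 1)) q') else 0)"
        by (simp add: sum.delta')
      also have "(\<Sum>c\<in>{1..j}. if c + 1 = x then (\<Sum>p\<in>compall (j - c). count_list (stuffle p (replicate m' 1)) q') else 0)
          = (if 2 \<le> x \<and> x \<le> j + 1 then (\<Sum>p\<in>compall (j - (x - 1)). count_list (stuffle p (replicate m' 1)) q') else 0)"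
      proof -
        have "(\<Sum>c\<in>{1..j}. if c + 1 = x then (\<Sum>p\<in>compall (j - c). count_list (stuffle p (replicate m' 1)) q') else 0)
            = (\<Sum>c\<in>{1..j}. if c = x - 1 \<and> 1 \<le> x then (\<Sum>p\<in>compall (j - c). count_list (stuffle p (replicate m' 1)) q') else 0)"
          by (intro sum.cong refl) auto
        also have "\<dots> = (if 2 \<le> x \<and> x \<le> j + 1 then (\<Sum>p\<in>compall (j - (x - 1)). count_list (stuffle p (replicate m' 1)) q') else 0)"
          by (cases "1 \<le> x") (auto simp: sum.delta')
        finally show ?thesis .
      qed
      finally have lhs: "(\<Sum>p\<in>compall j. count_list (stuffle p (replicate m 1)) (x # q'))
         = (if 1 \<le> x \<and> x \<le> j then (if pos q' \<and> S = j - x + m then L choose m else 0) else 0)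
          + (if 1 = x then (if pos q' \<and> S = j + m' then L choose m' else 0) else 0)
          + (if 2 \<le> x \<and> x \<le> j + 1 then (if pos q' \<and> S = j - (x - 1) + m' then L choose m' else 0) else 0)"
        unfolding IH .
      show ?thesis unfolding lhs rhs unfolding Suc
        by (rule countB_arith) (use LS j in auto)
    qed
  qed
qed


lemma choose_mult_gen: "(l choose (i + r)) * ((i + r) choose i) = (l choose i) * ((l - i) choose r)"
proof (cases "i + r \<le> l")
  case True
  then show ?thesis using choose_mult[of i "i + r" l] by (simp add: mult.commute)
next
  case False
  show ?thesis
  proof (cases "i \<le> l")
    case True
    then have h1: "l choose (i + r) = 0" and h2: "(l - i) choose r = 0" using False by simp_all
    show ?thesis unfolding h1 h2 by simp
  next
    case f2: False
    then have h1: "l choose (i + r) = 0" and h2: "l choose i = 0" by simp_all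
    show ?thesis unfolding h1 h2 by simp
  qed
qed

lemma alt_inner:
  assumes "1 \<le> i" "i \<le> k" "l \<le> k"
  shows "(\<Sum>j\<in>{..k-i}. (-1) ^ (k - i - j) * of_nat ((k - j) choose i) * of_nat (l choose (k - j)))
       = (if i = l then 1 else (0::'a::comm_ring_1))"
proof -
  have "(\<Sum>j\<in>{..k-i}. (-1) ^ (k - i - j) * of_nat ((k - j) choose i) * of_nat (l choose (k - j)))
      = (\<Sum>r\<in>{..k-i}. (-1) ^ r * of_nat ((i + r) choose i) * of_nat (l choose (i + r)) :: 'a)"
    by (rule sum.reindex_bij_witness[where i="\<lambda>r. k - i - r" and j="\<lambda>j. k - i - j"])
       (use assms in \<open>auto simp: algebra_simps\<close>)
  also have "\<dots> = (\<Sum>r\<in>{..k-i}. of_nat (l choose i) * ((-1) ^ r * of_nat ((l - i) choose r)))"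
  proof (intro sum.cong refl)
    fix r
    have "of_nat ((i + r) choose i) * of_nat (l choose (i + r)) = (of_nat ((l choose i) * ((l - i) choose r)) :: 'a)"
      unfolding choose_mult_gen[symmetric] by (simp add: mult.commute)
    then show "(-1) ^ r * of_nat ((i + r) choose i) * of_nat (l choose (i + r))
        = of_nat (l choose i) * ((-1) ^ r * of_nat ((l - i) choose r) :: 'a)"
      by (simp add: algebra_simps)
  qed
  also have "\<dots> = of_nat (l choose i) * (\<Sum>r\<in>{..k-i}. (-1) ^ r * of_nat ((l - i) choose r))"
    by (simp add: sum_distrib_left)
  also have "\<dots> = (if i = l then 1 else 0)"
  proof (cases "i \<le> l")
    case False then have z: "l choose i = 0" by simp
    show ?thesis unfolding z using False by simp
  next
    case True
    have "(\<Sum>r\<in>{..k-i}. (-1) ^ r * of_nat ((l - i) choose r) :: 'a) = (\<Sum>r\<in>{..l-i}. (-1) ^ r * of_nat ((l - i) choose r))"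
    proof -
      show ?thesis
      proof (rule sum.mono_neutral_right)
        show "{..l-i} \<subseteq> {..k-i}" using assms True by auto
        show "\<forall>r \<in> {..k-i} - {..l-i}. (-1) ^ r * of_nat ((l - i) choose r) = (0::'a)"
        proof
          fix r assume "r \<in> {..k-i} - {..l-i}"
          then have z: "(l - i) choose r = 0" by simp
          show "(-1) ^ r * of_nat ((l - i) choose r) = (0::'a)" unfolding z by simp
        qed
      qed simp
    qed
    also have "\<dots> = (if i = l then 1 else 0)"
    proof (cases "i = l")
      case True then show ?thesis by simp
    next
      case False
      then have "l - i > 0" using \<open>i \<le> l\<close> by simp
      then show ?thesis using choose_alternating_sum[of "l - i"] False by simp
    qed
    finally show ?thesis by simp
  qed
  finally show ?thesis .
qed

lemma coefC:
  fixes T :: "'a::comm_ring_1"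
  assumes "1 \<le> l" "l \<le> k" "1 \<le> n" "n \<le> k"
  shows "(\<Sum>j<k. (\<Sum>i=1..min n (k - j).
             (-1) ^ (k - i - j) * of_nat ((k - i) choose (k - n)) * of_nat ((k - j) choose i) * T ^ (n - i))
           * of_nat (l choose (k - j)))
       = (if l \<le> n then of_nat ((k - l) choose (n - l)) * T ^ (n - l) else 0)"
proof -
  define F where "F i j = (-1) ^ (k - i - j) * of_nat ((k - i) choose (k - n)) * of_nat ((k - j) choose i) * T ^ (n - i)
           * of_nat (l choose (k - j))" for i j
  have "(\<Sum>j<k. (\<Sum>i=1..min n (k - j).
             (-1) ^ (k - i - j) * of_nat ((k - i) choose (k - n)) * of_nat ((k - j) choose i) * T ^ (n - i))
           * of_nat (l choose (k - j)))
      = (\<Sum>j<k. \<Sum>i\<in>{1..n}. if i \<le> k - j then F i j else 0)"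
  proof (intro sum.cong refl)
    fix j
    have "{1..min n (k - j)} = {i \<in> {1..n}. i \<le> k - j}" by auto
    moreover have "(\<Sum>i\<in>{1..n}. if i \<le> k - j then F i j else 0) = (\<Sum>i\<in>{i \<in> {1..n}. i \<le> k - j}. F i j)"
      by (rule sum.inter_filter[symmetric]) simp
    ultimately show "(\<Sum>i=1..min n (k - j).
             (-1) ^ (k - i - j) * of_nat ((k - i) choose (k - n)) * of_nat ((k - j) choose i) * T ^ (n - i))
           * of_nat (l choose (k - j)) = (\<Sum>i\<in>{1..n}. if i \<le> k - j then F i j else 0)"
      by (simp only:) (simp add: sum_distrib_right F_def)
  qed
  also have "\<dots> = (\<Sum>i\<in>{1..n}. \<Sum>j<k. if i \<le> k - j then F i j else 0)"
    by (rule sum.swap)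
  also have "\<dots> = (\<Sum>i\<in>{1..n}. of_nat ((k - i) choose (k - n)) * T ^ (n - i) *
        (\<Sum>j\<in>{..k-i}. (-1) ^ (k - i - j) * of_nat ((k - j) choose i) * of_nat (l choose (k - j))))"
  proof (intro sum.cong refl)
    fix i assume i: "i \<in> {1..n}"
    have "{..k-i} = {j \<in> {..<k}. i \<le> k - j}" using i assms by auto
    moreover have "(\<Sum>j<k. if i \<le> k - j then F i j else 0) = (\<Sum>j\<in>{j \<in> {..<k}. i \<le> k - j}. F i j)"
      by (rule sum.inter_filter[symmetric]) simp
    ultimately have "(\<Sum>j<k. if i \<le> k - j then F i j else 0) = (\<Sum>j\<in>{..k-i}. F i j)"
      by simp
    then show "(\<Sum>j<k. if i \<le> k - j then F i j else 0) = of_nat ((k - i) choose (k - n)) * T ^ (n - i) *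
        (\<Sum>j\<in>{..k-i}. (-1) ^ (k - i - j) * of_nat ((k - j) choose i) * of_nat (l choose (k - j)))"
      by (simp add: sum_distrib_left F_def algebra_simps)
  qed
  also have "\<dots> = (\<Sum>i\<in>{1..n}. if i = l then of_nat ((k - i) choose (k - n)) * T ^ (n - i) else 0)"
  proof (intro sum.cong refl)
    fix i assume i: "i \<in> {1..n}"
    then have "1 \<le> i" "i \<le> k" using assms by auto
    from alt_inner[OF this assms(2), where 'a='a]
    show "of_nat ((k - i) choose (k - n)) * T ^ (n - i) *
        (\<Sum>j\<in>{..k-i}. (-1) ^ (k - i - j) * of_nat ((k - j) choose i) * of_nat (l choose (k - j)))
       = (if i = l then of_nat ((k - i) choose (k - n)) * T ^ (n - i) else 0)" by simp
  qed
  also have "\<dots> = (if l \<le> n then of_nat ((k - l) choose (k - n)) * T ^ (n - l) else 0)"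
    using assms by (simp add: sum.delta')
  finally have eq: "(\<Sum>j<k. (\<Sum>i=1..min n (k - j).
             (-1) ^ (k - i - j) * of_nat ((k - i) choose (k - n)) * of_nat ((k - j) choose i) * T ^ (n - i))
           * of_nat (l choose (k - j))) = (if l \<le> n then of_nat ((k - l) choose (k - n)) * T ^ (n - l) else 0)" .
  have "(k - l) choose (k - n) = (k - l) choose (n - l)" if "l \<le> n"
    using that assms binomial_symmetric[of "k - n" "k - l"] by simp
  then show ?thesis unfolding eq by simp
qed


lemma GL:
  fixes T :: "'a::comm_ring_1" and g :: "nat list \<Rightarrow> 'a"
  assumes n: "1 \<le> n" "n \<le> k"
  shows "(\<Sum>c\<in>compositions k n. \<Sum>p\<leftarrow>merges c. T ^ (n - length p) * g p)
    = (\<Sum>j<k. (\<Sum>i=1..min n (k - j). (-1) ^ (k - i - j) * of_nat ((k - i) choose (k - n))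
          * of_nat ((k - j) choose i) * T ^ (n - i))
        * (\<Sum>p\<leftarrow>merges (replicate j 1). \<Sum>s\<leftarrow>stuffle p (replicate (k - j) 1). g s))"
proof -
  define h where "h q = T ^ (n - length q) * g q" for q
  have "(\<Sum>c\<in>compositions k n. \<Sum>p\<leftarrow>merges c. T ^ (n - length p) * g p)
      = (\<Sum>c\<in>compositions k n. \<Sum>q\<in>compall k. of_nat (count_list (merges c) q) * h q)"
  proof (intro sum.cong refl)
    fix c assume c: "c \<in> compositions k n"
    have "set (merges c) \<subseteq> compall k"
      using c merges_facts by (fastforce simp: compositions_eq compall_def)
    then show "(\<Sum>p\<leftarrow>merges c. T ^ (n - length p) * g p) = (\<Sum>q\<in>compall k. of_nat (count_list (merges c) q) * h q)"
      unfolding h_def by (rule sum_list_as_sum[OF finite_compall])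
  qed
  also have "\<dots> = (\<Sum>q\<in>compall k. of_nat (\<Sum>c\<in>compositions k n. count_list (merges c) q) * h q)"
    by (subst sum.swap) (simp add: sum_distrib_right)
  also have "\<dots> = (\<Sum>q\<in>compall k. of_nat (if length q \<le> n then (k - length q) choose (n - length q) else 0) * h q)"
  proof (intro sum.cong refl)
    fix q assume q: "q \<in> compall k"
    then show "of_nat (\<Sum>c\<in>compositions k n. count_list (merges c) q) * h q
        = of_nat (if length q \<le> n then (k - length q) choose (n - length q) else 0) * h q"
      using countA[OF n(1), of q] by (simp add: compall_def)
  qed
  finally have lhs: "(\<Sum>c\<in>compositions k n. \<Sum>p\<leftarrow>merges c. T ^ (n - length p) * g p)
      = (\<Sum>q\<in>compall k. of_nat (if length q \<le> n then (k - length q) choose (n - length q) else 0) * h q)" .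
  have inner: "(\<Sum>p\<leftarrow>merges (replicate j 1). \<Sum>s\<leftarrow>stuffle p (replicate (k - j) 1). g s)
      = (\<Sum>q\<in>compall k. of_nat (length q choose (k - j)) * g q)" if j: "j < k" for j
  proof -
    have "(\<Sum>p\<leftarrow>merges (replicate j 1). \<Sum>s\<leftarrow>stuffle p (replicate (k - j) 1). g s)
        = (\<Sum>p\<in>compall j. \<Sum>s\<leftarrow>stuffle p (replicate (k - j) 1). g s)"
      by (rule sum_merges_ones)
    also have "\<dots> = (\<Sum>p\<in>compall j. \<Sum>q\<in>compall k. of_nat (count_list (stuffle p (replicate (k - j) 1)) q) * g q)"
    proof (intro sum.cong refl)
      fix p assume p: "p \<in> compall j"
      have "pos (replicate (k - j) (1::nat))" "sum_list (replicate (k - j) (1::nat)) = k - j"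
        by (auto simp: pos_def sum_list_replicate)
      then have "set (stuffle p (replicate (k - j) 1)) \<subseteq> compall k"
        using p j stuffle_facts[of _ p "replicate (k - j) 1"] by (auto simp: compall_def)
      then show "(\<Sum>s\<leftarrow>stuffle p (replicate (k - j) 1). g s)
          = (\<Sum>q\<in>compall k. of_nat (count_list (stuffle p (replicate (k - j) 1)) q) * g q)"
        by (rule sum_list_as_sum[OF finite_compall])
    qed
    also have "\<dots> = (\<Sum>q\<in>compall k. of_nat (\<Sum>p\<in>compall j. count_list (stuffle p (replicate (k - j) 1)) q) * g q)"
      by (subst sum.swap) (simp add: sum_distrib_right)
    also have "\<dots> = (\<Sum>q\<in>compall k. of_nat (length q choose (k - j)) * g q)"
    proof (intro sum.cong refl)
      fix q assume "q \<in> compall k"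
      then show "of_nat (\<Sum>p\<in>compall j. count_list (stuffle p (replicate (k - j) 1)) q) * g q
          = of_nat (length q choose (k - j)) * g q"
        using countB[where j=j and m="k - j" and q=q] j by simp
    qed
    finally show ?thesis .
  qed
  define coef where "coef j = (\<Sum>i=1..min n (k - j). (-1) ^ (k - i - j) * of_nat ((k - i) choose (k - n))
          * of_nat ((k - j) choose i) * T ^ (n - i))" for j
  have "(\<Sum>j<k. coef j * (\<Sum>p\<leftarrow>merges (replicate j 1). \<Sum>s\<leftarrow>stuffle p (replicate (k - j) 1). g s))
      = (\<Sum>j<k. coef j * (\<Sum>q\<in>compall k. of_nat (length q choose (k - j)) * g q))"
  proof (intro sum.cong refl)
    fix j assume "j \<in> {..<k}"
    then show "coef j * (\<Sum>p\<leftarrow>merges (replicate j 1). \<Sum>s\<leftarrow>stuffle p (replicate (k - j) 1). g s)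
      = coef j * (\<Sum>q\<in>compall k. of_nat (length q choose (k - j)) * g q)"
      using inner[of j] by simp
  qed
  also have "\<dots> = (\<Sum>q\<in>compall k. (\<Sum>j<k. coef j * of_nat (length q choose (k - j))) * g q)"
    by (simp add: sum_distrib_left sum_distrib_right sum.swap[of _ "{..<k}"] algebra_simps)
  also have "\<dots> = (\<Sum>q\<in>compall k. of_nat (if length q \<le> n then (k - length q) choose (n - length q) else 0) * h q)"
  proof (intro sum.cong refl)
    fix q assume q: "q \<in> compall k"
    have l1: "1 \<le> length q"
      using q n by (cases q) (auto simp: compall_def)
    have l2: "length q \<le> k" using q pos_length_le by (auto simp: compall_def)
    show "(\<Sum>j<k. coef j * of_nat (length q choose (k - j))) * g q
        = of_nat (if length q \<le> n then (k - length q) choose (n - length q) else 0) * h q"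
      unfolding coef_def coefC[OF l1 l2 n] h_def by simp
  qed
  finally show ?thesis unfolding lhs coef_def by (rule sym)
qed





lemma single_apply: "single u v = (if v = u then 1 else 0)"
  by (simp add: single_def)

lemma lin_ext_comb:
  assumes "finite A"
  shows "lin_ext F (\<lambda>w. \<Sum>x\<in>A. c x * single (h x) w) v = (\<Sum>x\<in>A. c x * F (h x) v)"
proof -
  define f where "f = (\<lambda>w. \<Sum>x\<in>A. c x * single (h x) w)"
  have z: "f u = 0" if "u \<notin> h ` A" for u
  proof -
    have "\<forall>x\<in>A. c x * single (h x) u = 0" using that by (auto simp: single_apply)
    then show ?thesis unfolding f_def by (intro sum.neutral) blast
  qed
  have sub: "supp f \<subseteq> h ` A" using z by (auto simp: supp_def)
  have "lin_ext F f v = (\<Sum>u\<in>h ` A. f u * F u v)"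
    unfolding lin_ext_def
    by (rule sum.mono_neutral_left) (use assms sub in \<open>auto simp: supp_def\<close>)
  also have "\<dots> = (\<Sum>u\<in>h ` A. \<Sum>x\<in>A. c x * (if u = h x then F u v else 0))"
  proof (intro sum.cong refl)
    fix u
    have "f u * F u v = (\<Sum>x\<in>A. c x * single (h x) u * F u v)"
      unfolding f_def by (rule sum_distrib_right)
    also have "\<dots> = (\<Sum>x\<in>A. c x * (if u = h x then F u v else 0))"
      by (intro sum.cong refl) (simp add: single_apply)
    finally show "f u * F u v = (\<Sum>x\<in>A. c x * (if u = h x then F u v else 0))" .
  qed
  also have "\<dots> = (\<Sum>x\<in>A. \<Sum>u\<in>h ` A. c x * (if u = h x then F u v else 0))"
    by (rule sum.swap)
  also have "\<dots> = (\<Sum>x\<in>A. c x * F (h x) v)"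
  proof (intro sum.cong refl)
    fix x assume x: "x \<in> A"
    have "(\<Sum>u\<in>h ` A. c x * (if u = h x then F u v else 0)) = c x * (\<Sum>u\<in>h ` A. if u = h x then F u v else 0)"
      by (rule sum_distrib_left[symmetric])
    also have "\<dots> = c x * F (h x) v" using x assms by (simp add: sum.delta)
    finally show "(\<Sum>u\<in>h ` A. c x * (if u = h x then F u v else 0)) = c x * F (h x) v" .
  qed
  finally show ?thesis unfolding f_def .
qed

lemma lin_ext_comb_list:
  "lin_ext F (\<lambda>w. \<Sum>p\<leftarrow>L. c p * single (h p) w) v = (\<Sum>p\<leftarrow>L. c p * F (h p) v)"
proof -
  have e: "(\<lambda>w. \<Sum>p\<leftarrow>L. c p * single (h p) w) = (\<lambda>w. \<Sum>i\<in>{..<length L}. c (L ! i) * single (h (L ! i)) w)"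
    by (simp add: sum_list_sum_nth atLeast0LessThan)
  show ?thesis unfolding e lin_ext_comb[OF finite_lessThan]
    by (simp add: sum_list_sum_nth atLeast0LessThan)
qed

lemma lin_ext_single: "lin_ext F (single u) = F u"
proof -
  have "supp (single u) = {u}" by (auto simp: supp_def single_def)
  then show ?thesis by (auto simp: lin_ext_def single_def fun_eq_iff)
qed

lemma lin_ext2_eq: "lin_ext2 F f g = lin_ext (\<lambda>u. lin_ext (F u) g) f"
  by (simp add: lin_ext2_def lin_ext_def fun_eq_iff sum_distrib_left mult.assoc)

definition lc :: "(rat poly \<times> word) list \<Rightarrow> elt" where
  "lc xs = (\<lambda>v. \<Sum>(c, u)\<leftarrow>xs. c * single u v)"

lemma sum_list_mset_eq: assumes "mset xs = mset ys" shows "sum_list (map f xs) = sum_list (map (f :: _ \<Rightarrow> _ :: comm_monoid_add) ys)"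
proof -
  have e: "sum_list (map f zs) = sum_mset (image_mset f (mset zs))" for zs
    by (metis mset_map sum_mset_sum_list)
  show ?thesis unfolding e using assms by simp
qed

lemma lc_mset: "mset xs = mset ys \<Longrightarrow> lc xs = lc ys"
  unfolding lc_def by (simp add: sum_list_mset_eq[of xs ys])

lemma conc_single_left: "conc (single u) f v = (if take (length u) v = u then f (drop (length u) v) else 0)"
proof (cases "take (length u) v = u")
  case True
  then have le: "length u \<le> length v" by (metis length_take min.absorb_iff1 min.commute)
  have "conc (single u) f v = (\<Sum>i\<in>{..length v}. if i = length u then f (drop i v) else 0)"
    unfolding conc_def
  proof (intro sum.cong refl)
    fix i assume "i \<in> {..length v}"
    then have "take i v = u \<longleftrightarrow> i = length u" using True by (metis length_take min.absorb_iff1 min.commute le atMost_iff)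
    then show "single u (take i v) * f (drop i v) = (if i = length u then f (drop i v) else 0)"
      by (simp add: single_apply)
  qed
  also have "\<dots> = f (drop (length u) v)" using le by simp
  finally show ?thesis using True by simp
next
  case False
  have "take i v \<noteq> u" if "i \<le> length v" for i
  proof
    assume "take i v = u"
    then have "i = length u" using that by auto
    then show False using False \<open>take i v = u\<close> by simp
  qed
  then show ?thesis using False by (simp add: conc_def single_apply)
qed

lemma conc_single_right: "conc f (single u) v =
  (if length u \<le> length v \<and> drop (length v - length u) v = u then f (take (length v - length u) v) else 0)"
proof (cases "length u \<le> length v \<and> drop (length v - length u) v = u")
  case True
  have "conc f (single u) v = (\<Sum>i\<in>{..length v}. if i = length v - length u then f (take i v) else 0)"
    unfolding conc_def
  proof (intro sum.cong refl)
    fix i assume i: "i \<in> {..length v}"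
    have "drop i v = u \<longleftrightarrow> i = length v - length u"
    proof
      assume "drop i v = u"
      then show "i = length v - length u" using i by auto
    qed (use True in auto)
    then show "f (take i v) * single u (drop i v) = (if i = length v - length u then f (take i v) else 0)"
      by (simp add: single_apply)
  qed
  also have "\<dots> = f (take (length v - length u) v)" by simp
  finally show ?thesis using True by simp
next
  case False
  have "drop i v \<noteq> u" if "i \<le> length v" for i
  proof
    assume "drop i v = u"
    then have "length u = length v - i" by auto
    then show False using False \<open>drop i v = u\<close> that by auto
  qed
  then show ?thesis using False by (simp add: conc_def single_apply)
qed

lemma single_append_iff_left: "(v = u @ w) \<longleftrightarrow> (take (length u) v = u \<and> drop (length u) v = w)"
  by (metis append_eq_conv_conj)

lemma conc_single_lc: "conc (single u) (lc xs) = lc (map (\<lambda>(c, w). (c, u @ w)) xs)"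
proof
  fix v
  show "conc (single u) (lc xs) v = lc (map (\<lambda>(c, w). (c, u @ w)) xs) v"
    unfolding conc_single_left lc_def
    by (induction xs) (auto simp: single_apply single_append_iff_left)
qed

lemma lc_single_app: "(\<Sum>(c, w)\<leftarrow>xs. c * single (w @ u) v)
   = (if length u \<le> length v \<and> drop (length v - length u) v = u then (\<Sum>(c, w)\<leftarrow>xs. c * single w (take (length v - length u) v)) else 0)"
proof (induction xs)
  case Nil then show ?case by simp
next
  case (Cons a xs)
  obtain c w where a: "a = (c, w)" by (cases a)
  have "(v = w @ u) \<longleftrightarrow> (length u \<le> length v \<and> drop (length v - length u) v = u \<and> take (length v - length u) v = w)"
  proof
    assume "length u \<le> length v \<and> drop (length v - length u) v = u \<and> take (length v - length u) v = w"
    then show "v = w @ u" by (metis append_take_drop_id)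
  qed auto
  then show ?case using Cons by (auto simp: a single_apply)
qed

lemma conc_lc_single: "conc (lc xs) (single u) = lc (map (\<lambda>(c, w). (c, w @ u)) xs)"
proof
  fix v
  show "conc (lc xs) (single u) v = lc (map (\<lambda>(c, w). (c, w @ u)) xs) v"
    unfolding conc_single_right lc_def
    by (simp add: lc_single_app[where u=u and v=v, unfolded split_def] split_def o_def)
qed




primrec sig :: "rat poly \<Rightarrow> word \<Rightarrow> (rat poly \<times> word) list" where
  "sig t [] = [(1, [])]"
| "sig t (l # w) = (case l of X \<Rightarrow> map (\<lambda>(c, u). (c, X # u)) (sig t w)
     | Y \<Rightarrow> map (\<lambda>(c, u). (t * c, X # u)) (sig t w) @ map (\<lambda>(c, u). (c, Y # u)) (sig t w))"

lemma single_lc: "single u = lc [(1, u)]"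
  by (simp add: lc_def fun_eq_iff)

lemma conc_add_left: "conc (\<lambda>v. a * f v + g v) h = (\<lambda>v. a * conc f h v + conc g h v)"
  by (simp add: conc_def fun_eq_iff sum.distrib sum_distrib_left algebra_simps)

lemma lc_append: "lc (xs @ ys) = (\<lambda>v. lc xs v + lc ys v)"
  by (simp add: lc_def fun_eq_iff)

lemma lc_scale: "(\<lambda>v. a * lc xs v) = lc (map (\<lambda>(c, u). (a * c, u)) xs)"
  by (induction xs) (auto simp: lc_def fun_eq_iff algebra_simps)

lemma sigma_lc: "sigma_w t w = lc (sig t w)"
proof (induction w)
  case Nil then show ?case by (simp add: single_lc)
next
  case (Cons l w)
  show ?case
  proof (cases l)
    case X
    then show ?thesis using Cons by (simp add: conc_single_lc)
  next
    case Y
    have "sigma_w t (Y # w) = (\<lambda>v. t * lc (map (\<lambda>(c, u). (c, [X] @ u)) (sig t w)) v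
                               + lc (map (\<lambda>(c, u). (c, [Y] @ u)) (sig t w)) v)"
      using Cons by (simp add: conc_add_left conc_single_lc)
    also have "\<dots> = lc (map (\<lambda>(c, u). (t * c, u)) (map (\<lambda>(c, u). (c, [X] @ u)) (sig t w))
                      @ map (\<lambda>(c, u). (c, [Y] @ u)) (sig t w))"
      unfolding lc_append lc_scale[symmetric] ..
    also have "map (\<lambda>(c, u). (t * c, u)) (map (\<lambda>(c, u). (c, [X] @ u)) (sig t w))
        = map (\<lambda>(c, u). (t * c, X # u)) (sig t w)"
      by (induction "sig t w") auto
    finally show ?thesis using Y by simp
  qed
qed

lemma sig_reps: "sig t (replicate r X @ w) = map (\<lambda>(c, u). (c, replicate r X @ u)) (sig t w)"
proof (induction r)
  case 0 then show ?case by (induction "sig t w") auto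
next
  case (Suc r)
  then show ?case by (induction "sig t w") auto
qed

lemma zw_Nil[simp]: "zw [] = []"
  by (simp add: zw_def)

lemma zw_Cons: "zw (k # ks) = replicate (k - 1) X @ Y # zw ks"
  by (simp add: zw_def)

lemma zw_snoc: "ks \<noteq> [] \<Longrightarrow> zw ks = butlast (zw ks) @ [Y]"
proof (induction ks)
  case (Cons k ks)
  then show ?case by (cases ks) (auto simp: zw_Cons butlast_append)
qed simp

lemma W_single: "butlast (zw [k]) = replicate (k - 1) X"
  by (simp add: zw_Cons butlast_append)

lemma W_Cons2: "butlast (zw (k # l # ks)) = replicate (k - 1) X @ Y # butlast (zw (l # ks))"
proof -
  have "zw (l # ks) \<noteq> []" by (simp add: zw_Cons)
  then show ?thesis by (simp add: zw_Cons[of k] butlast_append)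
qed

lemma zw_addhd: "p \<noteq> [] \<Longrightarrow> 1 \<le> hd p \<Longrightarrow> zw (addhd k p) = replicate k X @ zw p"
  by (cases p) (auto simp: addhd_def zw_Cons replicate_add[symmetric])

lemma mset_sig:
  assumes "pos ks" "ks \<noteq> []"
  shows "mset (map (\<lambda>(c, u). (c, u @ [Y])) (sig t (butlast (zw ks))))
       = mset (map (\<lambda>p. (t ^ (length ks - length p), zw p)) (merges ks))"
  using assms
proof (induction ks rule: induct_list012)
  case 1 then show ?case by simp
next
  case (2 k)
  have "sig t (replicate (k - 1) X @ []) = map (\<lambda>(c, u). (c, replicate (k - 1) X @ u)) (sig t [])"
    by (rule sig_reps)
  then show ?case by (simp add: W_single zw_Cons)
next
  case (3 k l ks)
  define S where "S = sig t (butlast (zw (l # ks)))"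
  define M where "M = merges (l # ks)"
  define F where "F = (\<lambda>p. (t ^ (length (l # ks) - length p), zw p))"
  define G1 where "G1 = (\<lambda>(c::rat poly, v::word). (t * c, replicate k X @ v))"
  define G2 where "G2 = (\<lambda>(c::rat poly, v::word). (c, replicate (k - 1) X @ Y # v))"
  have IH: "mset (map (\<lambda>(c, u). (c, u @ [Y])) S) = mset (map F M)"
    using 3 by (simp add: S_def M_def F_def)
  have k1: "1 \<le> k" using 3 by simp
  then obtain k' where k': "k = Suc k'" by (cases k) auto
  have rk: "replicate (k - 1) X @ X # u = replicate k X @ u" for u
    unfolding k' by (simp add: replicate_app_Cons_same)
  define ap where "ap = (\<lambda>(c::rat poly, u::word). (c, u @ [Y]))"
  have e1: "ap \<circ> ((\<lambda>(c, u). (c, replicate (k - 1) X @ u)) \<circ> (\<lambda>(c, u). (t * c, X # u))) = G1 \<circ> ap"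
    by (auto simp: fun_eq_iff G1_def ap_def k' replicate_append_same)
  have e2: "ap \<circ> ((\<lambda>(c, u). (c, replicate (k - 1) X @ u)) \<circ> (\<lambda>(c, u). (c, Y # u))) = G2 \<circ> ap"
    by (auto simp: fun_eq_iff G2_def ap_def)
  have "map ap (sig t (butlast (zw (k # l # ks))))
      = map G1 (map ap S) @ map G2 (map ap S)"
    unfolding W_Cons2 sig_reps sig.simps letter.case map_append map_map S_def[symmetric] e1 e2 ..
  then have "mset (map ap (sig t (butlast (zw (k # l # ks)))))
      = image_mset G1 (mset (map ap S)) + image_mset G2 (mset (map ap S))"
    by (simp add: multiset.map_comp)
  also have "\<dots> = image_mset G1 (mset (map F M)) + image_mset G2 (mset (map F M))"
    using IH unfolding ap_def by simp
  also have "\<dots> = mset (map (G1 \<circ> F) M) + mset (map (G2 \<circ> F) M)"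
    by (simp add: multiset.map_comp)
  also have "map (G1 \<circ> F) M = map (\<lambda>p. (t ^ (length (k # l # ks) - length p), zw p)) (map (addhd k) M)"
  proof -
    have "(G1 \<circ> F) p = (t ^ (length (k # l # ks) - length (addhd k p)), zw (addhd k p))" if "p \<in> set M" for p
    proof -
      have f: "p \<noteq> []" "pos p" "length p \<le> length (l # ks)" using merges_facts[of p "l # ks"] that 3 by (auto simp: M_def)
      then have "1 \<le> hd p" by (cases p) auto
      moreover have "length (addhd k p) = length p" using f(1) by (cases p) (auto simp: addhd_def)
      moreover have "t * t ^ (length (l # ks) - length p) = t ^ (length (k # l # ks) - length p)"
        using f(3) by (simp add: Suc_diff_le)
      ultimately show ?thesis using f by (simp add: G1_def F_def zw_addhd)
    qed
    then show ?thesis by simp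
  qed
  also have "map (G2 \<circ> F) M = map (\<lambda>p. (t ^ (length (k # l # ks) - length p), zw p)) (map (Cons k) M)"
    by (simp add: G2_def F_def zw_Cons)
  also have "mset (map (\<lambda>p. (t ^ (length (k # l # ks) - length p), zw p)) (map (addhd k) M))
      + mset (map (\<lambda>p. (t ^ (length (k # l # ks) - length p), zw p)) (map (Cons k) M))
      = mset (map (\<lambda>p. (t ^ (length (k # l # ks) - length p), zw p)) (merges (k # l # ks)))"
    unfolding M_def merges_Cons2 map_append mset_append by (rule add.commute)
  finally show ?case unfolding ap_def .
qed

lemma S_w_zw:
  assumes "pos ks"
  shows "S_w t (zw ks) = (\<lambda>v. \<Sum>p\<leftarrow>merges ks. t ^ (length ks - length p) * single (zw p) v)"
proof (cases "ks = []")
  case True then show ?thesis by (simp add: S_w_def fun_eq_iff)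
next
  case False
  have ne: "zw ks \<noteq> []" using zw_snoc[OF False] by (metis snoc_eq_iff_butlast)
  have last: "last (zw ks) = Y" using zw_snoc[OF False] by (metis last_snoc)
  have "S_w t (zw ks) = conc (lc (sig t (butlast (zw ks)))) (single [Y])"
    using ne last by (simp add: S_w_def sigma_lc)
  also have "\<dots> = lc (map (\<lambda>(c, u). (c, u @ [Y])) (sig t (butlast (zw ks))))"
    by (rule conc_lc_single)
  also have "\<dots> = lc (map (\<lambda>p. (t ^ (length ks - length p), zw p)) (merges ks))"
    by (rule lc_mset[OF mset_sig[OF assms False]])
  finally show ?thesis by (simp add: lc_def o_def)
qed





lemma dec_aux_reps: "dec_aux c (replicate r X @ w) = dec_aux (c + r) w"
  by (induction r arbitrary: c) auto

lemma dec_zw: "pos ks \<Longrightarrow> dec (zw ks) = ks"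
proof (induction ks)
  case Nil then show ?case by (simp add: dec_def)
next
  case (Cons k ks)
  then show ?case by (simp add: dec_def zw_Cons dec_aux_reps)
qed

lemma count_map_zw: "(of_nat (count_list (map zw L) w) :: rat poly) = (\<Sum>s\<leftarrow>L. single (zw s) w)"
  by (induction L) (auto simp: single_apply)

lemma harm_w_zw: "pos u \<Longrightarrow> pos v \<Longrightarrow> harm_w (zw u) (zw v) w = (\<Sum>s\<leftarrow>stuffle u v. single (zw s) w)"
  by (simp add: harm_w_def dec_zw count_map_zw)

lemma merges_scale: "merges (map (\<lambda>x. a * x) ks) = map (map (\<lambda>x. a * x)) (merges ks)"
  by (induction ks rule: merges.induct) (auto simp: distrib_left)

lemma stuffle_scale: "stuffle (map (\<lambda>x. a * x) u) (map (\<lambda>x. a * x) v) = map (map (\<lambda>x. a * x)) (stuffle u v)"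
proof (induction u v rule: stuffle.induct)
  case (1 l) then show ?case by simp
next
  case (2 k) then show ?case by (cases k) auto
next
  case (3 x u y v) then show ?case by (simp add: distrib_left)
qed

lemma pos_scale: "1 \<le> a \<Longrightarrow> pos ks \<Longrightarrow> pos (map (\<lambda>x. a * x) ks)"
  by (auto simp: pos_def)

lemma rep_scale: "replicate j (a::nat) = map (\<lambda>x. a * x) (replicate j 1)"
  by simp

lemma pos_rep1: "pos (replicate j (1::nat))"
  by (simp add: pos_def)

lemma part1:
  fixes a k n :: nat
  assumes a: "1 \<le> a" and n: "1 \<le> n" "n \<le> k"
  shows "S_map tvar (Nkn a k n)
           = (\<lambda>w. \<Sum>j<k. (\<Sum>i=1..min n (k - j).
                 (-1) ^ (k - i - j) * of_nat ((k - i) choose (k - n)) * of_nat ((k - j) choose i)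
                 * tvar ^ (n - i))
               * harm (S_map 1 (single (zw (replicate j a)))) (single (zw (replicate (k - j) a))) w)"
proof
  fix v
  define g where "g p = single (zw (map (\<lambda>x. a * x) p)) v" for p
  have "S_map tvar (Nkn a k n) v
      = lin_ext (S_w tvar) (\<lambda>w. \<Sum>ks\<in>compositions k n. 1 * single (zw (map (\<lambda>x. a * x) ks)) w) v"
    by (simp add: S_map_def Nkn_def)
  also have "\<dots> = (\<Sum>ks\<in>compositions k n. 1 * S_w tvar (zw (map (\<lambda>x. a * x) ks)) v)"
    by (rule lin_ext_comb[OF finite_compositions])
  also have "\<dots> = (\<Sum>ks\<in>compositions k n. \<Sum>p\<leftarrow>merges ks. tvar ^ (n - length p) * g p)"
  proof (intro sum.cong refl)
    fix ks assume ks: "ks \<in> compositions k n"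
    then have "pos ks" "length ks = n" by (auto simp: compositions_def pos_def)
    then show "1 * S_w tvar (zw (map (\<lambda>x. a * x) ks)) v = (\<Sum>p\<leftarrow>merges ks. tvar ^ (n - length p) * g p)"
      using a by (simp add: S_w_zw pos_scale merges_scale g_def o_def)
  qed
  also have "\<dots> = (\<Sum>j<k. (\<Sum>i=1..min n (k - j). (-1) ^ (k - i - j) * of_nat ((k - i) choose (k - n))
          * of_nat ((k - j) choose i) * tvar ^ (n - i))
        * (\<Sum>p\<leftarrow>merges (replicate j 1). \<Sum>s\<leftarrow>stuffle p (replicate (k - j) 1). g s))"
    by (rule GL[OF n])
  also have "\<dots> = (\<Sum>j<k. (\<Sum>i=1..min n (k - j). (-1) ^ (k - i - j) * of_nat ((k - i) choose (k - n))
          * of_nat ((k - j) choose i) * tvar ^ (n - i))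
        * harm (S_map 1 (single (zw (replicate j a)))) (single (zw (replicate (k - j) a))) v)"
  proof (intro sum.cong refl arg_cong2[where f="(*)"])
    fix j
    have S1: "S_map 1 (single (zw (replicate j a))) = (\<lambda>w. \<Sum>p\<leftarrow>merges (replicate j 1). 1 * single (zw (map (\<lambda>x. a * x) p)) w)"
    proof -
      have "S_map 1 (single (zw (replicate j a))) = S_w 1 (zw (map (\<lambda>x. a * x) (replicate j 1)))"
        by (simp add: S_map_def lin_ext_single)
      also have "\<dots> = (\<lambda>w. \<Sum>p\<leftarrow>merges (map (\<lambda>x. a * x) (replicate j 1)).
           1 ^ (length (map (\<lambda>x. a * x) (replicate j 1)) - length p) * single (zw p) w)"
        by (rule S_w_zw) (rule pos_scale[OF a pos_rep1])
      also have "\<dots> = (\<lambda>w. \<Sum>p\<leftarrow>merges (replicate j 1). 1 * single (zw (map (\<lambda>x. a * x) p)) w)"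
        unfolding merges_scale by (simp add: o_def)
      finally show ?thesis .
    qed
    have "harm (S_map 1 (single (zw (replicate j a)))) (single (zw (replicate (k - j) a))) v
        = lin_ext (\<lambda>u. harm_w u (zw (replicate (k - j) a))) (S_map 1 (single (zw (replicate j a)))) v"
      by (simp add: harm_def lin_ext2_eq lin_ext_single)
    also have "\<dots> = (\<Sum>p\<leftarrow>merges (replicate j 1). 1 * harm_w (zw (map (\<lambda>x. a * x) p)) (zw (replicate (k - j) a)) v)"
      unfolding S1 by (rule lin_ext_comb_list)
    also have "\<dots> = (\<Sum>p\<leftarrow>merges (replicate j 1). \<Sum>s\<leftarrow>stuffle p (replicate (k - j) 1). g s)"
    proof (rule arg_cong[where f=sum_list], rule map_cong[OF refl])
      fix p assume "p \<in> set (merges (replicate j 1))"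
      then have pp: "pos p" using set_merges_ones[of j] by (auto simp: compall_def)
      show "1 * harm_w (zw (map (\<lambda>x. a * x) p)) (zw (replicate (k - j) a)) v = (\<Sum>s\<leftarrow>stuffle p (replicate (k - j) 1). g s)"
      proof -
        have "harm_w (zw (map (\<lambda>x. a * x) p)) (zw (map (\<lambda>x. a * x) (replicate (k - j) 1))) v
           = (\<Sum>s\<leftarrow>stuffle (map (\<lambda>x. a * x) p) (map (\<lambda>x. a * x) (replicate (k - j) 1)). single (zw s) v)"
          by (rule harm_w_zw) (use a pp in \<open>auto simp: pos_def\<close>)
        also have "\<dots> = (\<Sum>s\<leftarrow>stuffle p (replicate (k - j) 1). g s)"
          unfolding stuffle_scale by (simp add: g_def o_def)
        finally show ?thesis by simp
      qed
    qed
    finally show "(\<Sum>p\<leftarrow>merges (replicate j 1). \<Sum>s\<leftarrow>stuffle p (replicate (k - j) 1). g s)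
        = harm (S_map 1 (single (zw (replicate j a)))) (single (zw (replicate (k - j) a))) v" by simp
  qed
  finally show "S_map tvar (Nkn a k n) v = (\<Sum>j<k. (\<Sum>i=1..min n (k - j).
                 (-1) ^ (k - i - j) * of_nat ((k - i) choose (k - n)) * of_nat ((k - j) choose i)
                 * tvar ^ (n - i))
               * harm (S_map 1 (single (zw (replicate j a)))) (single (zw (replicate (k - j) a))) v)" .
qed




fun Zt :: "nat \<Rightarrow> nat list \<Rightarrow> real" where
  "Zt 0 ks = (if ks = [] then 1 else 0)"
| "Zt (Suc N) [] = 1"
| "Zt (Suc N) (k # ks) = Zt N (k # ks) + 1 / real (Suc N) ^ k * Zt N ks"

fun Zs :: "nat \<Rightarrow> nat list \<Rightarrow> real" where
  "Zs 0 ks = (if ks = [] then 1 else 0)"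
| "Zs (Suc N) [] = 1"
| "Zs (Suc N) (k # ks) = Zs N (k # ks) + 1 / real (Suc N) ^ k * Zs (Suc N) ks"

lemma Zt_Nil[simp]: "Zt N [] = 1"
  by (cases N) auto

lemma Zt_harm: "Zt N u * Zt N v = (\<Sum>s\<leftarrow>stuffle u v. Zt N s)"
proof (induction N arbitrary: u v)
  case 0
  show ?case
  proof (cases "u = [] \<and> v = []")
    case True then show ?thesis by simp
  next
    case False
    have "s \<noteq> []" if "s \<in> set (stuffle u v)" for s using stuffle_facts[OF that] False by auto
    then have "(\<Sum>s\<leftarrow>stuffle u v. Zt 0 s) = (\<Sum>s\<leftarrow>stuffle u v. 0)"
      by (intro arg_cong[where f=sum_list] map_cong) auto
    then show ?thesis using False by auto
  qed
next
  case (Suc N)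
  show ?case
  proof (cases u)
    case Nil then show ?thesis by simp
  next
    case (Cons a u')
    show ?thesis
    proof (cases v)
      case Nil then show ?thesis using Cons by simp
    next
      case (Cons b v')
      define x where "x = 1 / real (Suc N)"
      have pw: "1 / real (Suc N) ^ m = x ^ m" for m by (simp add: x_def power_one_over)
      have step: "Zt (Suc N) s = Zt N s + x ^ hd s * Zt N (tl s)" if "s \<noteq> []" for s
        using that by (cases s) (simp_all only: Zt.simps pw list.sel, simp)
      have ne: "s \<noteq> []" if "s \<in> set (stuffle (a # u') (b # v'))" for s using stuffle_facts[OF that] by auto
      have "(\<Sum>s\<leftarrow>stuffle (a # u') (b # v'). Zt (Suc N) s)
          = (\<Sum>s\<leftarrow>stuffle (a # u') (b # v'). Zt N s + x ^ hd s * Zt N (tl s))"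
        by (intro arg_cong[where f=sum_list] map_cong refl) (simp add: step ne)
      also have "\<dots> = (\<Sum>s\<leftarrow>stuffle (a # u') (b # v'). Zt N s) + (\<Sum>s\<leftarrow>stuffle (a # u') (b # v'). x ^ hd s * Zt N (tl s))"
        by (rule sum_list_addf)
      also have "(\<Sum>s\<leftarrow>stuffle (a # u') (b # v'). Zt N s) = Zt N (a # u') * Zt N (b # v')"
        by (rule Suc.IH[symmetric])
      also have "(\<Sum>s\<leftarrow>stuffle (a # u') (b # v'). x ^ hd s * Zt N (tl s))
          = x ^ a * (\<Sum>s\<leftarrow>stuffle u' (b # v'). Zt N s) + x ^ b * (\<Sum>s\<leftarrow>stuffle (a # u') v'. Zt N s)
            + x ^ (a + b) * (\<Sum>s\<leftarrow>stuffle u' v'. Zt N s)"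
        by (simp add: o_def sum_list_const_mult)
      also have "\<dots> = x ^ a * (Zt N u' * Zt N (b # v')) + x ^ b * (Zt N (a # u') * Zt N v')
            + x ^ (a + b) * (Zt N u' * Zt N v')"
        by (simp only: Suc.IH)
      finally have ch: "(\<Sum>s\<leftarrow>stuffle (a # u') (b # v'). Zt (Suc N) s) = Zt N (a # u') * Zt N (b # v') +
          (x ^ a * (Zt N u' * Zt N (b # v')) + x ^ b * (Zt N (a # u') * Zt N v') + x ^ (a + b) * (Zt N u' * Zt N v'))" .
      have za: "Zt (Suc N) (a # u') = Zt N (a # u') + x ^ a * Zt N u'" by (simp only: Zt.simps pw)
      have zb: "Zt (Suc N) (b # v') = Zt N (b # v') + x ^ b * Zt N v'" by (simp only: Zt.simps pw)
      show ?thesis unfolding \<open>u = a # u'\<close> Cons za zb ch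
        by (simp add: algebra_simps power_add)
    qed
  qed
qed

lemma Zs_merges: "Zs N ks = (\<Sum>p\<leftarrow>merges ks. Zt N p)"
proof (induction N ks rule: Zs.induct)
  case (1 ks)
  show ?case
  proof (cases ks)
    case Nil then show ?thesis by simp
  next
    case (Cons k ks')
    have "p \<noteq> []" if "p \<in> set (merges ks)" for p using merges_facts[OF that] Cons by auto
    then have "(\<Sum>p\<leftarrow>merges ks. Zt 0 p) = (\<Sum>p\<leftarrow>merges ks. 0)"
      by (intro arg_cong[where f=sum_list] map_cong) auto
    then show ?thesis using Cons by simp
  qed
next
  case (2 N) then show ?case by simp
next
  case (3 N k ks)
  define x where "x = 1 / real (Suc N)"
  have pw: "1 / real (Suc N) ^ m = x ^ m" for m by (simp add: x_def power_one_over)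
  have step: "Zt (Suc N) s = Zt N s + x ^ hd s * Zt N (tl s)" if "s \<noteq> []" for s
    using that by (cases s) (simp_all only: Zt.simps pw list.sel, simp)
  show ?case
  proof (cases ks)
    case Nil
    then show ?thesis using 3 by (simp add: pw)
  next
    case (Cons l ks')
    define M where "M = merges (l # ks')"
    have neM: "p \<noteq> []" if "p \<in> set M" for p using merges_facts[OF that[unfolded M_def]] by auto
    have "(\<Sum>p\<leftarrow>merges (k # ks). Zt (Suc N) p) = (\<Sum>p\<leftarrow>merges (k # ks). Zt N p + x ^ hd p * Zt N (tl p))"
      by (intro arg_cong[where f=sum_list] map_cong refl step) (use merges_facts in auto)
    also have "\<dots> = (\<Sum>p\<leftarrow>merges (k # ks). Zt N p) + (\<Sum>p\<leftarrow>merges (k # ks). x ^ hd p * Zt N (tl p))"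
      by (rule sum_list_addf)
    also have "(\<Sum>p\<leftarrow>merges (k # ks). x ^ hd p * Zt N (tl p))
        = (\<Sum>p\<leftarrow>M. x ^ k * Zt N p + x ^ (k + hd p) * Zt N (tl p))"
      unfolding Cons merges_Cons2 M_def[symmetric]
      by (simp add: sum_list_addf o_def addhd_def)
    also have "\<dots> = x ^ k * (\<Sum>p\<leftarrow>M. Zt N p + x ^ hd p * Zt N (tl p))"
      by (simp add: sum_list_const_mult[symmetric] sum_list_addf power_add algebra_simps)
    also have "(\<Sum>p\<leftarrow>M. Zt N p + x ^ hd p * Zt N (tl p)) = (\<Sum>p\<leftarrow>M. Zt (Suc N) p)"
      by (intro arg_cong[where f=sum_list] map_cong refl) (simp add: step neM)
    finally have ch: "(\<Sum>p\<leftarrow>merges (k # ks). Zt (Suc N) p)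
        = (\<Sum>p\<leftarrow>merges (k # ks). Zt N p) + x ^ k * (\<Sum>p\<leftarrow>M. Zt (Suc N) p)" .
    have "Zs (Suc N) (k # ks) = Zs N (k # ks) + x ^ k * Zs (Suc N) ks"
      by (simp only: Zs.simps pw)
    also have "\<dots> = (\<Sum>p\<leftarrow>merges (k # ks). Zt N p) + x ^ k * (\<Sum>p\<leftarrow>M. Zt (Suc N) p)"
      unfolding "3.IH"(1) "3.IH"(2) M_def unfolding Cons ..
    finally show ?thesis using ch by simp
  qed
qed


definition trm :: "nat list \<Rightarrow> nat list \<Rightarrow> real" where
  "trm ks ms = (\<Prod>i<length ks. 1 / real (ms ! i) ^ (ks ! i))"

definition SD :: "nat \<Rightarrow> nat \<Rightarrow> nat list set" where
  "SD N n = {ms. length ms = n \<and> sorted_wrt (>) ms \<and> (\<forall>m\<in>set ms. 0 < m) \<and> (\<forall>m\<in>set ms. m \<le> N)}"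

definition WD :: "nat \<Rightarrow> nat \<Rightarrow> nat list set" where
  "WD N n = {ms. length ms = n \<and> sorted_wrt (\<ge>) ms \<and> (\<forall>m\<in>set ms. 0 < m) \<and> (\<forall>m\<in>set ms. m \<le> N)}"

lemma finite_bounded_lists: "finite {ms :: nat list. length ms = n \<and> (\<forall>m\<in>set ms. m \<le> N)}"
proof -
  have "{ms :: nat list. length ms = n \<and> (\<forall>m\<in>set ms. m \<le> N)} \<subseteq> {xs. set xs \<subseteq> {..N} \<and> length xs \<le> n}"
    by auto
  moreover have "finite {xs. set xs \<subseteq> {..N} \<and> length xs \<le> n}" by (rule finite_lists_length_le) auto
  ultimately show ?thesis by (rule finite_subset)
qed

lemma finite_SD: "finite (SD N n)"
  by (rule finite_subset[OF _ finite_bounded_lists[of n N]]) (auto simp: SD_def)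

lemma finite_WD: "finite (WD N n)"
  by (rule finite_subset[OF _ finite_bounded_lists[of n N]]) (auto simp: WD_def)

lemma trm_eta: "trm ks = (\<lambda>ms. \<Prod>i<length ks. 1 / real (ms ! i) ^ (ks ! i))"
  by (simp add: fun_eq_iff trm_def)

lemma trm_Nil[simp]: "trm [] ms = 1"
  by (simp add: trm_def)

lemma trm_Cons: "trm (k # ks) (m # ms) = 1 / real m ^ k * trm ks ms"
  by (simp only: trm_def length_Cons prod.lessThan_Suc_shift) simp

lemma SD_zero: "SD N 0 = {[]}" "WD N 0 = {[]}"
  by (auto simp: SD_def WD_def)

lemma SD_0_Suc: "SD 0 (Suc n) = {}" "WD 0 (Suc n) = {}"
  by (auto simp: SD_def WD_def length_Suc_conv)

lemma SD_Suc: "SD (Suc N) (Suc n) = SD N (Suc n) \<union> (Cons (Suc N)) ` SD N n"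
proof (intro set_eqI iffI)
  fix ms assume "ms \<in> SD (Suc N) (Suc n)"
  then obtain m ms' where ms: "ms = m # ms'" and h: "length ms' = n" "\<forall>y\<in>set ms'. m > y" "sorted_wrt (>) ms'"
      "0 < m" "\<forall>y\<in>set ms'. 0 < y" "m \<le> Suc N" "\<forall>y\<in>set ms'. y \<le> Suc N"
    by (auto simp: SD_def length_Suc_conv)
  show "ms \<in> SD N (Suc n) \<union> (Cons (Suc N)) ` SD N n"
  proof (cases "m = Suc N")
    case True
    then have "ms' \<in> SD N n" using h by (auto simp: SD_def)
    then show ?thesis using True ms by auto
  next
    case False
    then have "ms \<in> SD N (Suc n)" using h ms by (fastforce simp: SD_def)
    then show ?thesis by auto
  qed
qed (auto simp: SD_def less_Suc_eq_le intro: le_SucI)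

lemma WD_Suc: "WD (Suc N) (Suc n) = WD N (Suc n) \<union> (Cons (Suc N)) ` WD (Suc N) n"
proof (intro set_eqI iffI)
  fix ms assume "ms \<in> WD (Suc N) (Suc n)"
  then obtain m ms' where ms: "ms = m # ms'" and h: "length ms' = n" "\<forall>y\<in>set ms'. m \<ge> y" "sorted_wrt (\<ge>) ms'"
      "0 < m" "\<forall>y\<in>set ms'. 0 < y" "m \<le> Suc N" "\<forall>y\<in>set ms'. y \<le> Suc N"
    by (auto simp: WD_def length_Suc_conv)
  show "ms \<in> WD N (Suc n) \<union> (Cons (Suc N)) ` WD (Suc N) n"
  proof (cases "m = Suc N")
    case True
    then have "ms' \<in> WD (Suc N) n" using h by (auto simp: WD_def)
    then show ?thesis using True ms by auto
  next
    case False
    then have "ms \<in> WD N (Suc n)" using h ms by (fastforce simp: WD_def)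
    then show ?thesis by auto
  qed
qed (auto simp: WD_def intro: le_SucI)

lemma SD_disj: "SD N (Suc n) \<inter> (Cons (Suc N)) ` SD N n = {}"
  by (auto simp: SD_def)

lemma WD_disj: "WD N (Suc n) \<inter> (Cons (Suc N)) ` WD (Suc N) n = {}"
  by (auto simp: WD_def)

lemma Zt_SD: "Zt N ks = sum (trm ks) (SD N (length ks))"
proof (induction N ks rule: Zt.induct)
  case (1 ks) then show ?case by (cases ks) (auto simp: SD_zero SD_0_Suc)
next
  case (2 N) then show ?case by (simp add: SD_zero)
next
  case (3 N k ks)
  have "sum (trm (k # ks)) (SD (Suc N) (length (k # ks)))
      = sum (trm (k # ks)) (SD N (Suc (length ks))) + sum (trm (k # ks)) ((Cons (Suc N)) ` SD N (length ks))"
    unfolding length_Cons SD_Suc by (rule sum.union_disjoint) (auto simp: finite_SD SD_disj)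
  also have "sum (trm (k # ks)) ((Cons (Suc N)) ` SD N (length ks)) = (\<Sum>ms\<in>SD N (length ks). trm (k # ks) (Suc N # ms))"
    by (subst sum.reindex) (auto simp: inj_on_def)
  also have "\<dots> = 1 / real (Suc N) ^ k * sum (trm ks) (SD N (length ks))"
    by (simp add: trm_Cons sum_distrib_left)
  finally show ?case using 3 by simp
qed

lemma Zs_WD: "Zs N ks = sum (trm ks) (WD N (length ks))"
proof (induction N ks rule: Zs.induct)
  case (1 ks) then show ?case by (cases ks) (auto simp: SD_zero SD_0_Suc)
next
  case (2 N) then show ?case by (simp add: SD_zero)
next
  case (3 N k ks)
  have "sum (trm (k # ks)) (WD (Suc N) (length (k # ks)))
      = sum (trm (k # ks)) (WD N (Suc (length ks))) + sum (trm (k # ks)) ((Cons (Suc N)) ` WD (Suc N) (length ks))"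
    unfolding length_Cons WD_Suc by (rule sum.union_disjoint) (auto simp: finite_WD WD_disj)
  also have "sum (trm (k # ks)) ((Cons (Suc N)) ` WD (Suc N) (length ks)) = (\<Sum>ms\<in>WD (Suc N) (length ks). trm (k # ks) (Suc N # ms))"
    by (subst sum.reindex) (auto simp: inj_on_def)
  also have "\<dots> = 1 / real (Suc N) ^ k * sum (trm ks) (WD (Suc N) (length ks))"
    by (simp add: trm_Cons sum_distrib_left)
  finally show ?case using 3 by simp
qed





lemma exists_B:
  assumes mono: "\<And>N. B N \<subseteq> B (Suc N)" and exh: "\<And>x. x \<in> A \<Longrightarrow> \<exists>N. x \<in> B N"
  shows "finite F \<Longrightarrow> F \<subseteq> A \<Longrightarrow> \<exists>N. F \<subseteq> (B N :: 'a set)"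
proof (induction F rule: finite_induct)
  case empty then show ?case by simp
next
  case (insert x F)
  then obtain N1 where N1: "F \<subseteq> B N1" by auto
  obtain N2 where N2: "x \<in> B N2" using exh insert.prems by auto
  have incr: "N \<le> M \<Longrightarrow> B N \<subseteq> B M" for N M using lift_Suc_mono_le[of B, OF mono] by blast
  have "insert x F \<subseteq> B (max N1 N2)" using N1 N2 incr[of N1 "max N1 N2"] incr[of N2 "max N1 N2"] by auto
  then show ?case by blast
qed

lemma lim_infsum:
  fixes f :: "'a \<Rightarrow> real"
  assumes nonneg: "\<And>x. x \<in> A \<Longrightarrow> 0 \<le> f x" and mono: "\<And>N. B N \<subseteq> B (Suc N)"
    and fin: "\<And>N. finite (B N)" and sub: "\<And>N. B N \<subseteq> A"
    and exh: "\<And>x. x \<in> A \<Longrightarrow> \<exists>N. x \<in> B N" and bdd: "\<And>N. sum f (B N) \<le> C"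
  shows "(\<lambda>N. sum f (B N)) \<longlonglongrightarrow> infsum f A"
proof -
  have incr: "N \<le> M \<Longrightarrow> B N \<subseteq> B M" for N M using lift_Suc_mono_le[of B, OF mono] by blast
  have "f summable_on A"
  proof (rule nonneg_bdd_above_summable_on)
    show "0 \<le> f x" if "x \<in> A" for x using nonneg that .
    show "bdd_above (sum f ` {F. F \<subseteq> A \<and> finite F})"
    proof (rule bdd_aboveI2)
      fix F assume F: "F \<in> {F. F \<subseteq> A \<and> finite F}"
      then have "finite F" "F \<subseteq> A" by auto
      then obtain N where N: "F \<subseteq> B N" using exists_B[OF mono exh] by metis
      have "sum f F \<le> sum f (B N)"
        by (rule sum_mono2[OF fin N]) (use sub nonneg in blast)
      also have "\<dots> \<le> C" by (rule bdd)
      finally show "sum f F \<le> C" .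
    qed
  qed
  then have hs: "(sum f \<longlongrightarrow> infsum f A) (finite_subsets_at_top A)"
    using has_sum_infsum has_sum_def by blast
  have fl: "filterlim B (finite_subsets_at_top A) sequentially"
    unfolding filterlim_def le_filter_def eventually_filtermap
  proof (intro allI impI)
    fix P assume "eventually P (finite_subsets_at_top A)"
    then have "\<exists>X. finite X \<and> X \<subseteq> A \<and> (\<forall>Y. finite Y \<and> X \<subseteq> Y \<and> Y \<subseteq> A \<longrightarrow> P Y)"
      by (simp only: eventually_finite_subsets_at_top)
    then obtain X where X: "finite X" "X \<subseteq> A" "\<forall>Y. finite Y \<and> X \<subseteq> Y \<and> Y \<subseteq> A \<longrightarrow> P Y"
      by blast
    obtain N0 where N0: "X \<subseteq> B N0" using exists_B[OF mono exh X(1,2)] by blast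
    show "eventually (\<lambda>N. P (B N)) sequentially"
      unfolding eventually_sequentially
    proof (intro exI allI impI)
      fix N assume "N0 \<le> N"
      then have "X \<subseteq> B N" using N0 incr[of N0 N] by blast
      then show "P (B N)" using X(3) fin sub by blast
    qed
  qed
  show ?thesis using filterlim_compose[OF hs fl] by simp
qed

lemma Zt_nonneg: "0 \<le> Zt N ks"
  by (induction N ks rule: Zt.induct) (simp_all add: divide_nonneg_nonneg)

lemma Zt_mono: "Zt N ks \<le> Zt (Suc N) ks"
  by (cases ks) (simp_all add: divide_nonneg_nonneg Zt_nonneg)

definition H :: "nat \<Rightarrow> nat \<Rightarrow> real" where
  "H N k = (\<Sum>m\<in>{1..N}. 1 / real m ^ k)"

lemma H_nonneg: "0 \<le> H N k"
  by (simp add: H_def sum_nonneg)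

lemma H_Suc: "H (Suc N) k = H N k + 1 / real (Suc N) ^ k"
  by (simp add: H_def)

lemma Zt_Cons_le: "Zt N (k # ks) \<le> H N k * Zt N ks"
proof (induction N)
  case 0 then show ?case by (simp add: H_def)
next
  case (Suc N)
  have "Zt (Suc N) (k # ks) = Zt N (k # ks) + 1 / real (Suc N) ^ k * Zt N ks" by simp
  also have "\<dots> \<le> H N k * Zt N ks + 1 / real (Suc N) ^ k * Zt N ks" using Suc by simp
  also have "\<dots> = H (Suc N) k * Zt N ks" by (simp add: H_Suc algebra_simps)
  also have "\<dots> \<le> H (Suc N) k * Zt (Suc N) ks"
    by (rule mult_left_mono[OF Zt_mono H_nonneg])
  finally show ?case .
qed

lemma sum_inv_sq: "1 \<le> N \<Longrightarrow> (\<Sum>m\<in>{1..N}. 1 / real m ^ 2) \<le> 2 - 1 / real N"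
proof (induction N rule: nat_induct_at_least)
  case base then show ?case by simp
next
  case (Suc N)
  have "(\<Sum>m\<in>{1..Suc N}. 1 / real m ^ 2) = (\<Sum>m\<in>{1..N}. 1 / real m ^ 2) + 1 / real (Suc N) ^ 2"
    by simp
  also have "\<dots> \<le> 2 - 1 / real N + 1 / real (Suc N) ^ 2" using Suc by simp
  also have "\<dots> \<le> 2 - 1 / real (Suc N)"
  proof -
    have N: "real N \<ge> 1" using Suc by simp
    have e: "1 / real N - 1 / real (Suc N) = 1 / (real N * real (Suc N))" using N by (simp add: field_simps)
    have "1 / real (Suc N) ^ 2 \<le> 1 / (real N * real (Suc N))"
      unfolding power2_eq_square using N by (intro divide_left_mono mult_right_mono) auto
    then have "1 / real (Suc N) ^ 2 \<le> 1 / real N - 1 / real (Suc N)" unfolding e .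
    then show ?thesis by simp
  qed
  finally show ?case .
qed

lemma H_le2: assumes "2 \<le> k" shows "H N k \<le> 2"
proof -
  have "H N k \<le> (\<Sum>m\<in>{1..N}. 1 / real m ^ 2)"
    unfolding H_def
  proof (rule sum_mono)
    fix m assume "m \<in> {1..N}"
    then have m: "real m \<ge> 1" by simp
    have "real m ^ 2 \<le> real m ^ k" by (rule power_increasing[OF assms m])
    then show "1 / real m ^ k \<le> 1 / real m ^ 2"
      using m by (intro divide_left_mono) auto
  qed
  also have "\<dots> \<le> 2"
  proof (cases "N = 0")
    case True then show ?thesis by simp
  next
    case False
    then have "(\<Sum>m\<in>{1..N}. 1 / real m ^ 2) \<le> 2 - 1 / real N" using sum_inv_sq by simp
    also have "\<dots> \<le> 2" by simp
    finally show ?thesis .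
  qed
  finally show ?thesis .
qed

lemma Zt_bound: "\<forall>k\<in>set ks. 2 \<le> k \<Longrightarrow> Zt N ks \<le> 2 ^ length ks"
proof (induction ks)
  case Nil then show ?case by simp
next
  case (Cons k ks)
  have "Zt N (k # ks) \<le> H N k * Zt N ks" by (rule Zt_Cons_le)
  also have "\<dots> \<le> 2 * 2 ^ length ks"
    using Cons H_le2[of k N] H_nonneg[of N k] Zt_nonneg[of N ks] by (intro mult_mono) auto
  finally show ?case by simp
qed

lemma merges_ge: "\<forall>k\<in>set ks. c \<le> k \<Longrightarrow> p \<in> set (merges ks) \<Longrightarrow> \<forall>x\<in>set p. c \<le> (x::nat)"
proof (induction ks arbitrary: p rule: merges.induct)
  case 1 then show ?case by simp
next
  case (2 k) then show ?case by simp
next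
  case (3 k l ks)
  have h: "\<forall>x\<in>set ((k + l) # ks). c \<le> x" using 3(3) by auto
  have h2: "\<forall>x\<in>set (l # ks). c \<le> x" using 3(3) by auto
  from 3(4) consider (a) p' where "p = k # p'" "p' \<in> set (merges (l # ks))" | (b) "p \<in> set (merges ((k + l) # ks))"
    by auto
  then show ?case
  proof cases
    case a
    then have "\<forall>x\<in>set p'. c \<le> x" using 3(1)[OF h2] by blast
    then show ?thesis using a 3(3) by simp
  next
    case b then show ?thesis using 3(2)[OF h] by blast
  qed
qed

lemma stuffle_ge: "\<forall>k\<in>set u. c \<le> k \<Longrightarrow> \<forall>k\<in>set v. c \<le> k \<Longrightarrow> s \<in> set (stuffle u v) \<Longrightarrow> \<forall>x\<in>set s. c \<le> (x::nat)"
proof (induction u v arbitrary: s rule: stuffle.induct)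
  case (1 l) then show ?case by simp
next
  case (2 k ks) then show ?case by simp
next
  case (3 a u b v)
  have hu: "\<forall>x\<in>set u. c \<le> x" and hv: "\<forall>x\<in>set v. c \<le> x" and ha: "c \<le> a" and hb: "c \<le> b"
    using 3(4,5) by auto
  from 3(6) consider (a) s' where "s = a # s'" "s' \<in> set (stuffle u (b # v))"
    | (b) s' where "s = b # s'" "s' \<in> set (stuffle (a # u) v)"
    | (c) s' where "s = (a + b) # s'" "s' \<in> set (stuffle u v)"
    by auto
  then show ?case
  proof cases
    case a then show ?thesis using 3(1)[OF hu 3(5)] ha by auto
  next
    case b then show ?thesis using 3(2)[OF 3(4) hv] hb by auto
  next
    case c then show ?thesis using 3(3)[OF hu hv] ha by auto
  qed
qed

lemma trm_nonneg: "0 \<le> trm ks ms"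
  by (simp add: trm_def prod_nonneg)

lemma Zt_lim: assumes "\<forall>k\<in>set ks. 2 \<le> k" shows "(\<lambda>N. Zt N ks) \<longlonglongrightarrow> mzv ks"
proof -
  define A where "A = {ms :: nat list. length ms = length ks \<and> sorted_wrt (>) ms \<and> (\<forall>m\<in>set ms. 0 < m)}"
  have m: "mzv ks = infsum (trm ks) A" by (simp add: mzv_def trm_eta A_def)
  have "(\<lambda>N. sum (trm ks) (SD N (length ks))) \<longlonglongrightarrow> infsum (trm ks) A"
  proof (rule lim_infsum)
    show "SD N (length ks) \<subseteq> SD (Suc N) (length ks)" for N by (auto simp: SD_def)
    show "finite (SD N (length ks))" for N by (rule finite_SD)
    show "SD N (length ks) \<subseteq> A" for N by (auto simp: SD_def A_def)
    show "\<exists>N. x \<in> SD N (length ks)" if "x \<in> A" for x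
      using that by (intro exI[of _ "sum_list x"]) (auto simp: SD_def A_def member_le_sum_list)
    show "sum (trm ks) (SD N (length ks)) \<le> 2 ^ length ks" for N
      using Zt_bound[OF assms, of N] by (simp add: Zt_SD)
  qed (rule trm_nonneg)
  then show ?thesis by (simp add: m Zt_SD)
qed

lemma Zs_lim: assumes "\<forall>k\<in>set ks. 2 \<le> k" shows "(\<lambda>N. Zs N ks) \<longlonglongrightarrow> mzsv ks"
proof -
  define A where "A = {ms :: nat list. length ms = length ks \<and> sorted_wrt (\<ge>) ms \<and> (\<forall>m\<in>set ms. 0 < m)}"
  have m: "mzsv ks = infsum (trm ks) A" by (simp add: mzsv_def trm_eta A_def)
  have "(\<lambda>N. sum (trm ks) (WD N (length ks))) \<longlonglongrightarrow> infsum (trm ks) A"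
  proof (rule lim_infsum)
    show "WD N (length ks) \<subseteq> WD (Suc N) (length ks)" for N by (auto simp: WD_def)
    show "finite (WD N (length ks))" for N by (rule finite_WD)
    show "WD N (length ks) \<subseteq> A" for N by (auto simp: WD_def A_def)
    show "\<exists>N. x \<in> WD N (length ks)" if "x \<in> A" for x
      using that by (intro exI[of _ "sum_list x"]) (auto simp: WD_def A_def member_le_sum_list)
    show "sum (trm ks) (WD N (length ks)) \<le> (\<Sum>p\<leftarrow>merges ks. 2 ^ length p)" for N
    proof -
      have "sum (trm ks) (WD N (length ks)) = (\<Sum>p\<leftarrow>merges ks. Zt N p)" by (simp add: Zs_WD[symmetric] Zs_merges)
      also have "\<dots> \<le> (\<Sum>p\<leftarrow>merges ks. 2 ^ length p)"
        by (rule sum_list_mono) (use Zt_bound merges_ge[OF assms] in blast)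
      finally show ?thesis .
    qed
  qed (rule trm_nonneg)
  then show ?thesis by (simp add: m Zs_WD)
qed

lemma tendsto_sum_list:
  "(\<And>x. x \<in> set L \<Longrightarrow> (\<lambda>N. f N x) \<longlonglongrightarrow> l x) \<Longrightarrow> (\<lambda>N. \<Sum>x\<leftarrow>L. f N x :: real) \<longlonglongrightarrow> (\<Sum>x\<leftarrow>L. l x)"
  by (induction L) (auto intro!: tendsto_add)

lemma mzv_harm:
  assumes "\<forall>k\<in>set u. 2 \<le> k" "\<forall>k\<in>set v. 2 \<le> k"
  shows "mzv u * mzv v = (\<Sum>s\<leftarrow>stuffle u v. mzv s)"
proof (rule LIMSEQ_unique)
  show "(\<lambda>N. Zt N u * Zt N v) \<longlonglongrightarrow> mzv u * mzv v"
    by (intro tendsto_mult Zt_lim assms)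
  have "(\<lambda>N. \<Sum>s\<leftarrow>stuffle u v. Zt N s) \<longlonglongrightarrow> (\<Sum>s\<leftarrow>stuffle u v. mzv s)"
    by (intro tendsto_sum_list Zt_lim) (use stuffle_ge[OF assms] in blast)
  then show "(\<lambda>N. Zt N u * Zt N v) \<longlonglongrightarrow> (\<Sum>s\<leftarrow>stuffle u v. mzv s)"
    by (simp add: Zt_harm)
qed

lemma mzsv_merges:
  assumes "\<forall>k\<in>set ks. 2 \<le> k"
  shows "mzsv ks = (\<Sum>p\<leftarrow>merges ks. mzv p)"
proof (rule LIMSEQ_unique)
  show "(\<lambda>N. Zs N ks) \<longlonglongrightarrow> mzsv ks" by (rule Zs_lim[OF assms])
  have "(\<lambda>N. \<Sum>p\<leftarrow>merges ks. Zt N p) \<longlonglongrightarrow> (\<Sum>p\<leftarrow>merges ks. mzv p)"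
    by (intro tendsto_sum_list Zt_lim) (use merges_ge[OF assms] in blast)
  then show "(\<lambda>N. Zs N ks) \<longlonglongrightarrow> (\<Sum>p\<leftarrow>merges ks. mzv p)"
    by (simp add: Zs_merges)
qed




lemma part2:
  fixes a k n :: nat
  assumes a: "1 < a" and n: "1 \<le> n" "n \<le> k"
  shows "(\<Sum>ks\<in>compositions k n. zeta_t t (map (\<lambda>x. a * x) ks))
           = (\<Sum>j<k. (\<Sum>i=1..min n (k - j).
                 (-1) ^ (k - i - j) * real ((k - i) choose (k - n)) * real ((k - j) choose i)
                 * t ^ (n - i))
               * mzsv (replicate j a) * mzv (replicate (k - j) a))"
proof -
  define g where "g p = mzv (map (\<lambda>x. a * x) p)" for p
  have ge: "\<forall>x\<in>set (map (\<lambda>x. a * x) p). 2 \<le> x" if "pos p" for p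
  proof
    fix x assume "x \<in> set (map (\<lambda>x. a * x) p)"
    then obtain y where y: "x = a * y" "y \<in> set p" by auto
    then have "1 \<le> y" using that by (auto simp: pos_def)
    then have h: "a * 1 \<le> a * y" by (rule mult_le_mono2)
    have "2 \<le> a" using a by simp
    then show "2 \<le> x" using h y(1) by linarith
  qed
  have "(\<Sum>ks\<in>compositions k n. zeta_t t (map (\<lambda>x. a * x) ks))
      = (\<Sum>ks\<in>compositions k n. \<Sum>p\<leftarrow>merges ks. t ^ (n - length p) * g p)"
  proof (intro sum.cong refl)
    fix ks assume "ks \<in> compositions k n"
    then have "length ks = n" by (simp add: compositions_def)
    then show "zeta_t t (map (\<lambda>x. a * x) ks) = (\<Sum>p\<leftarrow>merges ks. t ^ (n - length p) * g p)"
      by (simp add: zeta_t_def merges_scale g_def o_def)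
  qed
  also have "\<dots> = (\<Sum>j<k. (\<Sum>i=1..min n (k - j). (-1) ^ (k - i - j) * of_nat ((k - i) choose (k - n))
          * of_nat ((k - j) choose i) * t ^ (n - i))
        * (\<Sum>p\<leftarrow>merges (replicate j 1). \<Sum>s\<leftarrow>stuffle p (replicate (k - j) 1). g s))"
    by (rule GL[OF n])
  also have "\<dots> = (\<Sum>j<k. (\<Sum>i=1..min n (k - j).
                 (-1) ^ (k - i - j) * real ((k - i) choose (k - n)) * real ((k - j) choose i)
                 * t ^ (n - i))
               * mzsv (replicate j a) * mzv (replicate (k - j) a))"
  proof (intro sum.cong refl)
    fix j
    have pr1: "pos (replicate j (1::nat))" "pos (replicate (k - j) (1::nat))" by (simp_all add: pos_def)
    have "mzsv (map (\<lambda>x. a * x) (replicate j 1)) = (\<Sum>p\<leftarrow>merges (map (\<lambda>x. a * x) (replicate j 1)). mzv p)"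
      by (rule mzsv_merges[OF ge[OF pr1(1)]])
    also have "\<dots> = (\<Sum>p\<leftarrow>merges (replicate j 1). g p)"
      unfolding merges_scale by (simp add: g_def o_def)
    finally have ms: "mzsv (replicate j a) = (\<Sum>p\<leftarrow>merges (replicate j 1). g p)" by simp
    have "(\<Sum>p\<leftarrow>merges (replicate j 1). g p) * mzv (map (\<lambda>x. a * x) (replicate (k - j) 1))
        = (\<Sum>p\<leftarrow>merges (replicate j 1). g p * mzv (map (\<lambda>x. a * x) (replicate (k - j) 1)))"
      by (rule sum_list_mult_const[symmetric])
    also have "\<dots> = (\<Sum>p\<leftarrow>merges (replicate j 1). \<Sum>s\<leftarrow>stuffle p (replicate (k - j) 1). g s)"
    proof (rule arg_cong[where f=sum_list], rule map_cong[OF refl])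
      fix p assume "p \<in> set (merges (replicate j 1))"
      then have pp: "pos p" using set_merges_ones[of j] by (auto simp: compall_def)
      have "g p * mzv (map (\<lambda>x. a * x) (replicate (k - j) 1))
          = (\<Sum>s\<leftarrow>stuffle (map (\<lambda>x. a * x) p) (map (\<lambda>x. a * x) (replicate (k - j) 1)). mzv s)"
        unfolding g_def by (rule mzv_harm[OF ge[OF pp] ge[OF pr1(2)]])
      also have "\<dots> = (\<Sum>s\<leftarrow>stuffle p (replicate (k - j) 1). g s)"
        unfolding stuffle_scale by (simp add: g_def o_def)
      finally show "g p * mzv (map (\<lambda>x. a * x) (replicate (k - j) 1)) = (\<Sum>s\<leftarrow>stuffle p (replicate (k - j) 1). g s)" .
    qed
    finally have mm: "mzsv (replicate j a) * mzv (replicate (k - j) a)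
        = (\<Sum>p\<leftarrow>merges (replicate j 1). \<Sum>s\<leftarrow>stuffle p (replicate (k - j) 1). g s)"
      unfolding ms by simp
    show "(\<Sum>i=1..min n (k - j). (-1) ^ (k - i - j) * of_nat ((k - i) choose (k - n))
          * of_nat ((k - j) choose i) * t ^ (n - i))
        * (\<Sum>p\<leftarrow>merges (replicate j 1). \<Sum>s\<leftarrow>stuffle p (replicate (k - j) 1). g s)
        = (\<Sum>i=1..min n (k - j).
                 (-1) ^ (k - i - j) * real ((k - i) choose (k - n)) * real ((k - j) choose i)
                 * t ^ (n - i))
               * mzsv (replicate j a) * mzv (replicate (k - j) a)"
      unfolding mult.assoc[of _ "mzsv (replicate j a)"] mm ..
  qed
  finally show ?thesis .
qed

theorem corollary4p11:
  fixes a k n :: nat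
  assumes "1 \<le> a" and "1 \<le> n" and "n \<le> k"
  shows "S_map tvar (Nkn a k n)
           = (\<lambda>w. \<Sum>j<k. (\<Sum>i=1..min n (k - j).
                 (-1) ^ (k - i - j) * of_nat ((k - i) choose (k - n)) * of_nat ((k - j) choose i)
                 * tvar ^ (n - i))
               * harm (S_map 1 (single (zw (replicate j a)))) (single (zw (replicate (k - j) a))) w)
       \<and> (1 < a \<longrightarrow> (\<forall>t::real.
           (\<Sum>ks\<in>compositions k n. zeta_t t (map (\<lambda>x. a * x) ks))
           = (\<Sum>j<k. (\<Sum>i=1..min n (k - j).
                 (-1) ^ (k - i - j) * real ((k - i) choose (k - n)) * real ((k - j) choose i)
                 * t ^ (n - i))
               * mzsv (replicate j a) * mzv (replicate (k - j) a))))"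
  using part1[OF assms] part2[OF _ assms(2,3)] by blast



end
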